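(* Let $p\ge5$ be prime, $i,j\in\mathbb{N}_0$, $a\in\{2,\dots,(p-1)/2\}$, and let $o_a$ be the multiplicative order of $a(1-a)^{-1}$ in $(\mathbb{Z}/p\mathbb{Z})^*$. Then the $\mathbb{Z}_p$-submodule $\vartheta_a(\mathfrak{p}^i\wedge\mathfrak{p}^j)$ of $K$ (spanned by all $\vartheta_a(x\wedge y)$, $x\in\mathfrak{p}^i$, $y\in\mathfrak{p}^j$) equals $\mathfrak{p}^{i+j+\epsilon(i,j)}$, where $\epsilon(i,j)=1$ if $o_a\mid(i-j)$ and $\epsilon(i,j)=0$ otherwise. In particular $\vartheta_a(\mathfrak{p}^i\wedge\mathfrak{p}^i)=\mathfrak{p}^{2i+1}$, so the restriction of $\vartheta_a$ lies in $\hat H_i$ for all $i\in\mathbb{N}_0$.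
   Context: Let $\theta$ be a primitive $p$-th root of unity, $K=\mathbb{Q}_p(\theta)$, $\mathcal{O}$ its ring of integers, $\mathfrak{p}$ its maximal ideal; $\mathfrak{p}^j$ is the unique ideal of index $p^j$ in $\mathcal{O}$. For $j\in\mathbb{Z}$ prime to $p$, $\sigma_j$ is the Galois automorphism of $K$ with $\theta\mapsto\theta^j$. For $a\in\{2,\dots,(p-1)/2\}$, $\vartheta_a:K\wedge K\to K$ is defined by $\vartheta_a(x\wedge y)=\sigma_a(x)\sigma_{1-a}(y)-\sigma_{1-a}(x)\sigma_a(y)$. $P=\langle\theta\rangle$ acts by multiplication on ideals and diagonally on exterior squares; $\hat{H}_i=\{\gamma\in\mathrm{Hom}_P(\mathfrak{p}^i\wedge\mathfrak{p}^i,\mathfrak{p}^{2i+1}) \mid \gamma \text{ surjective}\}$. *)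

theory Defs
  imports "HOL-Number_Theory.Number_Theory"
begin

text \<open>Fix a prime p. The p-adic integers Z_p are represented as compatible
sequences of residues x n in [0, p^n) with x (Suc n) mod p^n = x n.
The ring of integers O = Z_p[theta] of K = Q_p(theta) is free over Z_p with basis
1, theta, ..., theta^(p-2); an element of O is represented as v with v n k the
residue modulo p^n of its k-th coordinate (k < p-1), and v n k = 0 for k >= p-1.
Multiplication uses theta^p = 1 and theta^(p-1) = -(1 + ... + theta^(p-2)).\<close>

definition Zp :: "nat \<Rightarrow> (nat \<Rightarrow> int) set" where
  "Zp p = {x. \<forall>n. 0 \<le> x n \<and> x n < int p ^ n \<and> x (Suc n) mod int p ^ n = x n}"

type_synonym oelt = "nat \<Rightarrow> nat \<Rightarrow> int"

definition Ocar :: "nat \<Rightarrow> oelt set" where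
  "Ocar p = {v. (\<forall>n k. p - 1 \<le> k \<longrightarrow> v n k = 0) \<and>
                (\<forall>n k. 0 \<le> v n k \<and> v n k < int p ^ n) \<and>
                (\<forall>n k. v (Suc n) k mod int p ^ n = v n k)}"

definition oadd :: "nat \<Rightarrow> oelt \<Rightarrow> oelt \<Rightarrow> oelt" where
  "oadd p x y = (\<lambda>n k. if k < p - 1 then (x n k + y n k) mod int p ^ n else 0)"

definition osub :: "nat \<Rightarrow> oelt \<Rightarrow> oelt \<Rightarrow> oelt" where
  "osub p x y = (\<lambda>n k. if k < p - 1 then (x n k - y n k) mod int p ^ n else 0)"

text \<open>Coefficient of theta^m (m < p) in the product computed in Z[x]/(x^p - 1).\<close>
definition oconv :: "nat \<Rightarrow> oelt \<Rightarrow> oelt \<Rightarrow> nat \<Rightarrow> nat \<Rightarrow> int" where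
  "oconv p x y n m = (\<Sum>k<p - 1. \<Sum>l<p - 1. if (k + l) mod p = m then x n k * y n l else 0)"

definition omul :: "nat \<Rightarrow> oelt \<Rightarrow> oelt \<Rightarrow> oelt" where
  "omul p x y = (\<lambda>n m. if m < p - 1 then (oconv p x y n m - oconv p x y n (p - 1)) mod int p ^ n else 0)"

definition oone :: "nat \<Rightarrow> oelt" where
  "oone p = (\<lambda>n k. if k = 0 then 1 mod int p ^ n else 0)"

definition otheta :: "nat \<Rightarrow> oelt" where
  "otheta p = (\<lambda>n k. if k = 1 then 1 mod int p ^ n else 0)"

definition opow :: "nat \<Rightarrow> oelt \<Rightarrow> nat \<Rightarrow> oelt" where
  "opow p x i = (omul p x ^^ i) (oone p)"

text \<open>Galois automorphism sigma_j : theta \<mapsto> theta^j (j an integer prime to p).\<close>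
definition osigma_coeff :: "nat \<Rightarrow> int \<Rightarrow> oelt \<Rightarrow> nat \<Rightarrow> nat \<Rightarrow> int" where
  "osigma_coeff p j x n m = (\<Sum>k<p - 1. if (j * int k) mod int p = int m then x n k else 0)"

definition osigma :: "nat \<Rightarrow> int \<Rightarrow> oelt \<Rightarrow> oelt" where
  "osigma p j x = (\<lambda>n m. if m < p - 1
      then (osigma_coeff p j x n m - osigma_coeff p j x n (p - 1)) mod int p ^ n else 0)"

definition oideal :: "nat \<Rightarrow> nat \<Rightarrow> oelt set" where
  "oideal p i = {omul p (opow p (osub p (oone p) (otheta p)) i) y | y. y \<in> Ocar p}"

definition vartheta :: "nat \<Rightarrow> int \<Rightarrow> oelt \<Rightarrow> oelt \<Rightarrow> oelt" where
  "vartheta p a x y = osub p (omul p (osigma p a x) (osigma p (1 - a) y))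
                             (omul p (osigma p (1 - a) x) (osigma p a y))"

definition zp_span :: "nat \<Rightarrow> oelt set \<Rightarrow> oelt set" where
  "zp_span p S = {z. \<exists>(m::nat) (c::nat \<Rightarrow> nat \<Rightarrow> int) (s::nat \<Rightarrow> oelt).
      (\<forall>l<m. c l \<in> Zp p \<and> s l \<in> S) \<and>
      z = (\<lambda>n k. if k < p - 1 then (\<Sum>l<m. c l n * s l n k) mod int p ^ n else 0)}"

definition ord_a :: "nat \<Rightarrow> int \<Rightarrow> nat" where
  "ord_a p a = nat (ord (int p) ((a * modular_inverse (int p) (1 - a)) mod int p))"

end

theory Submission
  imports Defs "HOL-Computational_Algebra.Polynomial"
begin

context
  fixes p :: nat
  assumes pp: "prime p" and p5: "p \<ge> 5"
begin

definition Phi :: "int poly" where "Phi = (\<Sum>k<p. monom 1 k)"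

definition cg :: "nat \<Rightarrow> int poly \<Rightarrow> int poly \<Rightarrow> bool" where
  "cg n f g \<longleftrightarrow> (\<exists>q r. f - g = smult (int p ^ n) q + Phi * r)"

lemma cg_refl[simp]: "cg n f f"
  unfolding cg_def by (rule exI[of _ 0], rule exI[of _ 0]) simp

lemma cgE: assumes "cg n f g" obtains q r where "f - g = smult (int p ^ n) q + Phi * r"
  using assms unfolding cg_def by blast

lemma cgI: "f - g = smult (int p ^ n) q + Phi * r \<Longrightarrow> cg n f g"
  unfolding cg_def by blast

lemma cg_sym: "cg n f g \<Longrightarrow> cg n g f"
  apply (erule cgE) subgoal for q r by (rule cgI[of _ _ _ "-q" "-r"]) (simp add: algebra_simps)
  done

lemma cg_trans[trans]: "cg n f g \<Longrightarrow> cg n g h \<Longrightarrow> cg n f h"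
  apply (erule cgE, erule cgE) subgoal for q r q' r'
    by (rule cgI[of _ _ _ "q+q'" "r+r'"]) (simp add: algebra_simps smult_add_right)
  done

lemma cg_eq_trans[trans]: "a = b \<Longrightarrow> cg n b c \<Longrightarrow> cg n a c" by simp
lemma eq_cg_trans[trans]: "cg n a b \<Longrightarrow> b = c \<Longrightarrow> cg n a c" by simp

lemma cg_add: "cg n f g \<Longrightarrow> cg n f' g' \<Longrightarrow> cg n (f + f') (g + g')"
  apply (erule cgE, erule cgE) subgoal for q r q' r'
    by (rule cgI[of _ _ _ "q+q'" "r+r'"]) (simp add: algebra_simps smult_add_right)
  done

lemma cg_diff: "cg n f g \<Longrightarrow> cg n f' g' \<Longrightarrow> cg n (f - f') (g - g')"
  apply (erule cgE, erule cgE) subgoal for q r q' r'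
    by (rule cgI[of _ _ _ "q-q'" "r-r'"]) (simp add: algebra_simps smult_diff_right)
  done

lemma cg_neg: "cg n f g \<Longrightarrow> cg n (- f) (- g)"
  using cg_diff[of n 0 0 f g] by simp

lemma cg_multl: "cg n f g \<Longrightarrow> cg n (h * f) (h * g)"
  apply (erule cgE) subgoal for q r
    by (rule cgI[of _ _ _ "h*q" "h*r"]) (simp add: algebra_simps)
  done

lemma cg_mult: "cg n f g \<Longrightarrow> cg n f' g' \<Longrightarrow> cg n (f * f') (g * g')"
proof -
  assume a: "cg n f g" "cg n f' g'"
  have "cg n (f * f') (f' * g)" using cg_multl[OF a(1), of f'] by (simp add: mult.commute)
  also have "cg n (f' * g) (g * g')" using cg_multl[OF a(2), of g] by (simp add: mult.commute)
  finally show ?thesis .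
qed

lemma cg_smult: "cg n f g \<Longrightarrow> cg n (smult c f) (smult c g)"
  using cg_multl[of n f g "[:c:]"] by simp

lemma cg_pow: "cg n f g \<Longrightarrow> cg n (f ^ k) (g ^ k)"
  by (induction k) (auto intro: cg_mult)

lemma cg_sum: "(\<And>x. x \<in> A \<Longrightarrow> cg n (f x) (g x)) \<Longrightarrow> cg n (sum f A) (sum g A)"
  by (induction A rule: infinite_finite_induct) (auto intro: cg_add)

lemma cg_Suc: "cg (Suc n) f g \<Longrightarrow> cg n f g"
  apply (erule cgE) subgoal for q r
    by (rule cgI[of _ _ _ "smult (int p) q" r]) (simp add: algebra_simps)
  done

lemma cg_le: "m \<le> n \<Longrightarrow> cg n f g \<Longrightarrow> cg m f g"
  by (induction n rule: dec_induct) (auto dest: cg_Suc)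

lemma cg_Phi: "cg n (Phi * r) 0"
  unfolding cg_def by (rule exI[of _ 0], rule exI[of _ r]) simp

lemma cg_pn: "cg n (smult (int p ^ n) q) 0"
  unfolding cg_def by (rule exI[of _ q], rule exI[of _ 0]) simp

lemma cg_0I: "cg n (f - g) 0 \<Longrightarrow> cg n f g"
  unfolding cg_def by simp

lemma cg_0D: "cg n f g \<Longrightarrow> cg n (f - g) 0"
  unfolding cg_def by simp

lemma p2: "p \<ge> 2" using p5 by simp

lemma coeff_Phi: "coeff Phi k = (if k < p then 1 else 0)"
  by (simp add: Phi_def coeff_sum)

lemma degree_Phi: "degree Phi = p - 1"
proof (rule antisym)
  show "degree Phi \<le> p - 1" by (rule degree_le) (auto simp: coeff_Phi)
  show "p - 1 \<le> degree Phi" by (rule le_degree) (use p2 in \<open>simp add: coeff_Phi\<close>)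
qed

lemma lead_Phi: "coeff Phi (degree Phi) = 1"
  using p2 by (simp add: degree_Phi coeff_Phi)

lemma Phi_ne0: "Phi \<noteq> 0"
  using lead_Phi by auto

lemma X_pow: "(monom (1::int) 1) ^ i = monom 1 i"
  by (simp add: monom_power)

lemma XP: "monom (1::int) p - 1 = (monom 1 1 - 1) * Phi"
proof -
  have "(\<lambda>i. monom (1::int) 1 ^ i) = monom 1" by (auto simp: monom_power)
  then show ?thesis using power_diff_1_eq[of "monom (1::int) 1" p] by (simp add: Phi_def monom_power)
qed

lemma cg_XP: "cg n (monom c (p * q)) (monom c 0)"
proof -
  have "monom (1::int) (p * q) - 1 = (monom 1 p) ^ q - 1" by (simp add: monom_power)
  also have "\<dots> = (monom 1 p - 1) * (\<Sum>i<q. (monom 1 p)^i)" by (rule power_diff_1_eq)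
  finally have e: "monom (1::int) (p * q) - 1 = Phi * ((monom 1 1 - 1) * (\<Sum>i<q. (monom 1 p)^i))"
    by (simp add: XP algebra_simps)
  have "monom c (p * q) - monom c 0 = smult c (monom (1::int) (p * q) - 1)"
    by (simp add: smult_monom monom_0 smult_diff_right)
  also have "\<dots> = Phi * smult c ((monom 1 1 - 1) * (\<Sum>i<q. (monom 1 p)^i))"
    by (simp add: e)
  finally show ?thesis
    by (intro cgI[of _ _ _ 0 "smult c ((monom 1 1 - 1) * (\<Sum>i<q. (monom 1 p)^i))"]) simp
qed

lemma cg_monom_mod: "cg n (monom c k) (monom c (k mod p))"
proof -
  have k: "k = k mod p + p * (k div p)" by simp
  have "monom c k = monom 1 (k mod p) * monom c (p * (k div p))"
    by (subst k) (simp add: mult_monom)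
  moreover have "cg n (monom 1 (k mod p) * monom c (p * (k div p))) (monom 1 (k mod p) * monom c 0)"
    by (intro cg_multl cg_XP)
  ultimately show ?thesis by (simp add: mult_monom monom_0 smult_monom)
qed

lemma cg_mod_coeff: "cg n (monom (c mod (int p ^ n)) k) (monom c k)"
proof -
  have "monom (c mod (int p ^ n)) k - monom c k = smult (int p ^ n) (monom (- (c div int p ^ n)) k)"
    by (rule poly_eqI) (simp add: smult_monom algebra_simps minus_div_mult_eq_mod[symmetric])
  then show ?thesis by (intro cgI[of _ _ _ _ 0]) simp
qed

definition Pv :: "oelt \<Rightarrow> nat \<Rightarrow> int poly" where
  "Pv w n = (\<Sum>k<p - 1. monom (w n k) k)"

lemma coeff_Pv: "coeff (Pv w n) k = (if k < p - 1 then w n k else 0)"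
  by (simp add: Pv_def coeff_sum)

definition redc :: "oelt \<Rightarrow> nat \<Rightarrow> bool" where
  "redc w n \<longleftrightarrow> (\<forall>k. (p - 1 \<le> k \<longrightarrow> w n k = 0) \<and> 0 \<le> w n k \<and> w n k < int p ^ n)"

lemma sum_monoms_eq: assumes "\<And>k. k \<ge> p - 1 \<Longrightarrow> coeff f k = 0"
  shows "(\<Sum>k<p - 1. monom (coeff f k) k) = f"
proof (cases "f = 0")
  case True then show ?thesis by simp
next
  case False
  have "degree f < p - 1"
  proof (rule ccontr)
    assume "\<not> degree f < p - 1"
    then have "coeff f (degree f) = 0" using assms by simp
    with False show False by simp
  qed
  then have "degree f \<le> p - 2" by simp
  from poly_as_sum_of_monoms'[OF this]
  have "(\<Sum>i\<le>p-2. monom (coeff f i) i) = f" .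
  moreover have "{..p-2} = {..<p-1}" using p2 by auto
  ultimately show ?thesis by simp
qed

lemma cg_small_zero:
  assumes z: "\<And>k. k \<ge> p - 1 \<Longrightarrow> coeff f k = 0" and c: "cg n f 0"
  shows "int p ^ n dvd coeff f k"
proof -
  from c obtain q r where e: "f = smult (int p ^ n) q + Phi * r" by (auto elim: cgE)
  obtain s t where st: "pseudo_divmod q Phi = (s, t)" by (cases "pseudo_divmod q Phi")
  from pseudo_divmod[OF Phi_ne0 st] lead_Phi
  have q: "q = Phi * s + t" and t: "t = 0 \<or> degree t < p - 1" by (auto simp: degree_Phi)
  define g where "g = f - smult (int p ^ n) t"
  have g: "g = Phi * (r + smult (int p ^ n) s)"
    unfolding g_def e q by (simp add: algebra_simps smult_add_right)
  have gz: "coeff g k = 0" if "k \<ge> p - 1" for k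
  proof -
    have "coeff t k = 0" using t that by (auto intro: coeff_eq_0)
    then show ?thesis using z[OF that] by (simp add: g_def)
  qed
  have "g = 0"
  proof (rule ccontr)
    assume "g \<noteq> 0"
    then have h: "r + smult (int p ^ n) s \<noteq> 0" using g by auto
    have dg: "degree g = (p - 1) + degree (r + smult (int p ^ n) s)"
      unfolding g using degree_mult_eq[OF Phi_ne0 h] degree_Phi by simp
    have "coeff g (degree g) \<noteq> 0" using \<open>g \<noteq> 0\<close> by simp
    moreover have "coeff g (degree g) = 0" using gz dg by simp
    ultimately show False by simp
  qed
  then have "f = smult (int p ^ n) t" by (simp add: g_def)
  then show ?thesis by simp
qed

lemma Pv_inj:
  assumes r1: "redc w1 n" and r2: "redc w2 n" and c: "cg n (Pv w1 n) (Pv w2 n)"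
  shows "w1 n = w2 n"
proof
  fix k
  show "w1 n k = w2 n k"
  proof (cases "k < p - 1")
    case False then show ?thesis using r1 r2 by (simp add: redc_def)
  next
    case True
    have "int p ^ n dvd coeff (Pv w1 n - Pv w2 n) k"
      by (rule cg_small_zero) (auto simp: coeff_Pv intro: cg_0D c)
    then have d: "int p ^ n dvd w1 n k - w2 n k" using True by (simp add: coeff_Pv)
    have "0 \<le> w1 n k" "w1 n k < int p ^ n" "0 \<le> w2 n k" "w2 n k < int p ^ n"
      using r1 r2 by (auto simp: redc_def)
    moreover from d obtain m where m: "w1 n k - w2 n k = int p ^ n * m" by (auto elim: dvdE)
    moreover have P: "int p ^ n > 0" using p2 by simp
    ultimately have "m = 0"
    proof -
      have "\<not> m \<ge> 1"
      proof
        assume "m \<ge> 1" then have "int p ^ n * m \<ge> int p ^ n * 1" using P by (intro mult_left_mono) auto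
        with m \<open>w1 n k < int p ^ n\<close> \<open>0 \<le> w2 n k\<close> show False by simp
      qed
      moreover have "\<not> m \<le> -1"
      proof
        assume "m \<le> -1" then have "int p ^ n * m \<le> int p ^ n * (-1)" using P by (intro mult_left_mono) auto
        with m \<open>w2 n k < int p ^ n\<close> \<open>0 \<le> w1 n k\<close> show False by simp
      qed
      ultimately show ?thesis by simp
    qed
    with m show ?thesis by simp
  qed
qed

lemma Ppos: "int p ^ n > 0" using p2 by simp

definition pm :: "int poly \<Rightarrow> int poly" where "pm f = pseudo_mod f Phi"
definition pq :: "int poly \<Rightarrow> int poly" where "pq f = fst (pseudo_divmod f Phi)"

definition mkv :: "(nat \<Rightarrow> int poly) \<Rightarrow> oelt" where
  "mkv F = (\<lambda>n k. if k < p - 1 then coeff (pm (F n)) k mod int p ^ n else 0)"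

definition compat :: "(nat \<Rightarrow> int poly) \<Rightarrow> bool" where
  "compat F \<longleftrightarrow> (\<forall>n. cg n (F (Suc n)) (F n))"

lemma cg_sum_mod: "cg n (\<Sum>k<m. monom (h k mod int p ^ n) k) (\<Sum>k<m. monom (h k) k)"
  by (intro cg_sum cg_mod_coeff)

lemma pmod_props: "F = Phi * pq F + pm F \<and> (\<forall>k \<ge> p - 1. coeff (pm F) k = 0)"
proof -
  obtain q r where st: "pseudo_divmod F Phi = (q, r)" by (cases "pseudo_divmod F Phi")
  from pseudo_divmod[OF Phi_ne0 st] lead_Phi
  have q: "F = Phi * q + r" and t: "r = 0 \<or> degree r < p - 1" by (auto simp: degree_Phi)
  have e: "pm F = r" "pq F = q" using st by (simp_all add: pseudo_mod_def pm_def pq_def)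
  have "\<forall>k \<ge> p - 1. coeff r k = 0" using t by (auto intro: coeff_eq_0)
  with q e show ?thesis by simp
qed

lemma pm_eq: "F = Phi * pq F + pm F" by (rule conjunct1[OF pmod_props])
lemma pm_coeff: "k \<ge> p - 1 \<Longrightarrow> coeff (pm F) k = 0" using conjunct2[OF pmod_props] by blast

lemma Pv_mkv: "cg n (Pv (mkv F) n) (F n)"
proof -
  let ?r = "pm (F n)"
  have "Pv (mkv F) n = (\<Sum>k<p-1. monom (coeff ?r k mod int p ^ n) k)"
    unfolding Pv_def mkv_def by (intro sum.cong refl) simp
  also have "cg n \<dots> (\<Sum>k<p-1. monom (coeff ?r k) k)" by (rule cg_sum_mod)
  also have "(\<Sum>k<p-1. monom (coeff ?r k) k) = ?r"
    by (rule sum_monoms_eq) (rule pm_coeff)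
  also have "cg n ?r (F n)"
  proof -
    have e: "F n = Phi * pq (F n) + pm (F n)" by (rule pm_eq)
    have "F n - ?r = smult (int p ^ n) 0 + Phi * pq (F n)"
      using e by (metis add_diff_cancel_right' smult_0_right add_0)
    from cgI[OF this] show ?thesis by (rule cg_sym)
  qed
  finally show ?thesis .
qed

lemma redc_mkv: "redc (mkv F) n"
  using Ppos[of n] by (auto simp: redc_def mkv_def)

lemma Ocar_redc: "w \<in> Ocar p \<Longrightarrow> redc w n"
  by (auto simp: Ocar_def redc_def)

lemma Ocar_intro:
  assumes r: "\<And>n. redc w n" and c: "\<And>n. cg n (Pv w (Suc n)) (Pv w n)"
  shows "w \<in> Ocar p"
  unfolding Ocar_def
proof (intro CollectI conjI allI impI)
  fix n k
  show "p - 1 \<le> k \<Longrightarrow> w n k = 0" using r by (auto simp: redc_def)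
  show "0 \<le> w n k" "w n k < int p ^ n" using r by (auto simp: redc_def)
  show "w (Suc n) k mod int p ^ n = w n k"
  proof (cases "k < p - 1")
    case False then show ?thesis using r[of n] r[of "Suc n"] by (simp add: redc_def)
  next
    case True
    have "int p ^ n dvd coeff (Pv w (Suc n) - Pv w n) k"
      by (rule cg_small_zero) (auto simp: coeff_Pv intro: cg_0D c)
    then have "int p ^ n dvd w (Suc n) k - w n k" using True by (simp add: coeff_Pv)
    then have "w (Suc n) k mod int p ^ n = w n k mod int p ^ n" by (simp add: mod_eq_dvd_iff)
    also have "\<dots> = w n k" using r[of n] by (simp add: redc_def)
    finally show ?thesis .
  qed
qed

lemma mkv_Ocar: assumes "compat F" shows "mkv F \<in> Ocar p"
proof (rule Ocar_intro[OF redc_mkv])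
  fix n
  have "cg n (Pv (mkv F) (Suc n)) (F (Suc n))" using Pv_mkv cg_Suc by blast
  also have "cg n (F (Suc n)) (F n)" using assms by (simp add: compat_def)
  also have "cg n (F n) (Pv (mkv F) n)" by (rule cg_sym[OF Pv_mkv])
  finally show "cg n (Pv (mkv F) (Suc n)) (Pv (mkv F) n)" .
qed

lemma eq_by_cg:
  assumes "\<And>n. redc w1 n" "\<And>n. redc w2 n" "\<And>n. cg n (Pv w1 n) (Pv w2 n)"
  shows "w1 = w2"
  using Pv_inj assms by blast

lemma Ocar_step: assumes "w \<in> Ocar p" shows "w (Suc n) k - w n k = int p ^ n * (w (Suc n) k div int p ^ n)"
proof -
  have "w (Suc n) k mod int p ^ n = w n k" using assms unfolding Ocar_def by blast
  then show ?thesis using minus_mod_eq_mult_div[of "w (Suc n) k" "int p ^ n"] by simp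
qed

lemma smult_sum_right: "smult a (\<Sum>i\<in>S. f i) = (\<Sum>i\<in>S. smult a (f i))"
  by (induct S rule: infinite_finite_induct) (auto simp: smult_add_right)

lemma compat_lin: assumes "w \<in> Ocar p"
  shows "compat (\<lambda>n. \<Sum>k<p-1. smult (w n k) (h k))"
  unfolding compat_def
proof
  fix n
  have "(\<Sum>k<p-1. smult (w (Suc n) k) (h k)) - (\<Sum>k<p-1. smult (w n k) (h k))
     = (\<Sum>k<p-1. smult (w (Suc n) k - w n k) (h k))"
    by (simp add: sum_subtractf[symmetric] smult_diff_left)
  also have "\<dots> = (\<Sum>k<p-1. smult (int p ^ n) (smult (w (Suc n) k div int p ^ n) (h k)))"
    by (rule sum.cong) (simp_all add: Ocar_step[OF assms])
  also have "\<dots> = smult (int p ^ n) (\<Sum>k<p-1. smult (w (Suc n) k div int p ^ n) (h k))"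
    by (rule smult_sum_right[symmetric])
  finally show "cg n (\<Sum>k<p-1. smult (w (Suc n) k) (h k)) (\<Sum>k<p-1. smult (w n k) (h k))"
    by (intro cgI[of _ _ _ _ 0]) simp
qed

lemma Pv_lin: "Pv w n = (\<Sum>k<p-1. smult (w n k) (monom 1 k))"
  by (simp add: Pv_def smult_monom)

lemma Ocar_compat: "w \<in> Ocar p \<Longrightarrow> compat (Pv w)"
  using compat_lin[of w "\<lambda>k. monom 1 k"] by (simp add: Pv_lin[abs_def])

lemma Ocar_cg: "w \<in> Ocar p \<Longrightarrow> cg n (Pv w (Suc n)) (Pv w n)"
  using Ocar_compat compat_def by blast

lemma compat_add: "compat F \<Longrightarrow> compat G \<Longrightarrow> compat (\<lambda>n. F n + G n)"
  unfolding compat_def by (auto intro: cg_add)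
lemma compat_diff: "compat F \<Longrightarrow> compat G \<Longrightarrow> compat (\<lambda>n. F n - G n)"
  unfolding compat_def by (auto intro: cg_diff)
lemma compat_mult: "compat F \<Longrightarrow> compat G \<Longrightarrow> compat (\<lambda>n. F n * G n)"
  unfolding compat_def by (auto intro: cg_mult)
lemma compat_const: "compat (\<lambda>n. f)"
  unfolding compat_def by auto
lemma compat_pow: "compat F \<Longrightarrow> compat (\<lambda>n. F n ^ k)"
  unfolding compat_def by (auto intro: cg_pow)
lemma compat_sum: "finite A \<Longrightarrow> (\<And>l. l \<in> A \<Longrightarrow> compat (F l)) \<Longrightarrow> compat (\<lambda>n. \<Sum>l\<in>A. F l n)"
  unfolding compat_def by (auto intro: cg_sum)

lemma compat_zp: assumes c: "c \<in> Zp p" and F: "compat F"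
  shows "compat (\<lambda>n. smult (c n) (F n))"
  unfolding compat_def
proof
  fix n
  have "c (Suc n) mod int p ^ n = c n" using c unfolding Zp_def by blast
  then have st: "c (Suc n) - c n = int p ^ n * (c (Suc n) div int p ^ n)"
    using minus_mod_eq_mult_div[of "c (Suc n)" "int p ^ n"] by simp
  have "cg n (smult (c (Suc n)) (F (Suc n))) (smult (c (Suc n)) (F n))"
    using F by (auto simp: compat_def intro: cg_smult)
  also have "cg n (smult (c (Suc n)) (F n)) (smult (c n) (F n))"
  proof -
    have "smult (c (Suc n)) (F n) - smult (c n) (F n) = smult (int p ^ n) (smult (c (Suc n) div int p ^ n) (F n))"
      by (simp add: smult_diff_left[symmetric] st)
    then show ?thesis by (intro cgI[of _ _ _ "smult (c (Suc n) div int p ^ n) (F n)" 0]) simp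
  qed
  finally show "cg n (smult (c (Suc n)) (F (Suc n))) (smult (c n) (F n))" .
qed

lemma sum_lt_p: "(\<Sum>m<p. f m) = (\<Sum>m<p-1. f m) + f (p - 1)"
proof -
  have "p = Suc (p - 1)" using p2 by simp
  then have "{..<p} = insert (p-1) {..<p-1}" by auto
  then show ?thesis by (simp add: add.commute)
qed

lemma cg_cyc_red: "cg n (\<Sum>m<p-1. monom ((c m - c (p-1)) mod int p ^ n) m) (\<Sum>m<p. monom (c m) m)"
proof -
  have "cg n (\<Sum>m<p-1. monom ((c m - c (p-1)) mod int p ^ n) m) (\<Sum>m<p-1. monom (c m - c (p-1)) m)"
    by (rule cg_sum_mod)
  also have "(\<Sum>m<p-1. monom (c m - c (p-1)) m) = (\<Sum>m<p-1. monom (c m) m) - smult (c (p-1)) (\<Sum>m<p-1. monom 1 m)"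
    by (simp add: diff_monom[symmetric] sum_subtractf smult_sum_right smult_monom)
  also have "cg n \<dots> (\<Sum>m<p. monom (c m) m)"
  proof -
    have Ph: "Phi = (\<Sum>m<p-1. monom 1 m) + monom 1 (p-1)" unfolding Phi_def by (rule sum_lt_p)
    have "(\<Sum>m<p. monom (c m) m) - ((\<Sum>m<p-1. monom (c m) m) - smult (c (p-1)) (\<Sum>m<p-1. monom 1 m))
       = smult (int p ^ n) 0 + Phi * [:c (p-1):]"
      by (simp add: sum_lt_p Ph smult_add_right smult_monom algebra_simps)
    from cgI[OF this] show ?thesis by (rule cg_sym)
  qed
  finally show ?thesis .
qed

lemma cyc_sum: "(\<Sum>m<p. monom (\<Sum>k\<in>K. if e k mod p = m then w k else 0) m) = (\<Sum>k\<in>K. monom (w k) (e k mod p))"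
proof -
  have "(\<Sum>m<p. monom (\<Sum>k\<in>K. if e k mod p = m then w k else 0) m)
      = (\<Sum>m<p. \<Sum>k\<in>K. if e k mod p = m then monom (w k) m else 0)"
    by (simp add: monom_sum if_distrib[of "\<lambda>x. monom x _"] cong: if_cong)
  also have "\<dots> = (\<Sum>k\<in>K. \<Sum>m<p. if e k mod p = m then monom (w k) m else 0)"
    by (rule sum.swap)
  also have "\<dots> = (\<Sum>k\<in>K. monom (w k) (e k mod p))"
  proof (rule sum.cong[OF refl])
    fix k
    have "e k mod p \<in> {..<p}" using p2 by simp
    then show "(\<Sum>m<p. if e k mod p = m then monom (w k) m else 0) = monom (w k) (e k mod p)"
      by (simp add: sum.delta)
  qed
  finally show ?thesis .
qed

lemma cyc_sum2: "(\<Sum>m<p. monom (\<Sum>k\<in>A. \<Sum>l\<in>B. if e k l mod p = m then w k l else 0) m)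
   = (\<Sum>k\<in>A. \<Sum>l\<in>B. monom (w k l) (e k l mod p))"
proof -
  have "(\<Sum>m<p. monom (\<Sum>k\<in>A. \<Sum>l\<in>B. if e k l mod p = m then w k l else 0) m)
     = (\<Sum>m<p. \<Sum>k\<in>A. monom (\<Sum>l\<in>B. if e k l mod p = m then w k l else 0) m)"
    by (rule sum.cong[OF refl], rule monom_sum)
  also have "\<dots> = (\<Sum>k\<in>A. \<Sum>m<p. monom (\<Sum>l\<in>B. if e k l mod p = m then w k l else 0) m)"
    by (rule sum.swap)
  also have "\<dots> = (\<Sum>k\<in>A. \<Sum>l\<in>B. monom (w k l) (e k l mod p))"
    by (rule sum.cong[OF refl], rule cyc_sum)
  finally show ?thesis .
qed

lemma cg_cyc: "cg n (\<Sum>k\<in>K. monom (w k) (e k mod p)) (\<Sum>k\<in>K. monom (w k) (e k))"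
  by (intro cg_sum cg_sym[OF cg_monom_mod])

definition sg :: "nat \<Rightarrow> int poly \<Rightarrow> int poly" where "sg s f = pcompose f (monom 1 s)"

lemma sg_monom: "sg s (monom c k) = monom c (s * k)"
  unfolding sg_def
proof (induction k)
  case 0 then show ?case by (simp add: monom_0)
next
  case (Suc k)
  then show ?case by (simp add: monom_Suc pcompose_pCons mult_monom)
qed

lemma sg_add: "sg s (f + g) = sg s f + sg s g" by (simp add: sg_def pcompose_add)
lemma sg_diff: "sg s (f - g) = sg s f - sg s g" by (simp add: sg_def pcompose_diff)
lemma sg_mult: "sg s (f * g) = sg s f * sg s g" by (simp add: sg_def pcompose_mult)
lemma sg_smult: "sg s (smult c f) = smult c (sg s f)" by (simp add: sg_def pcompose_smult)
lemma sg_sum: "sg s (sum f A) = (\<Sum>x\<in>A. sg s (f x))" by (simp add: sg_def pcompose_sum)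
lemma sg_1: "sg s 1 = 1" by (simp add: sg_def pcompose_1)
lemma sg_const: "sg s [:c:] = [:c:]" by (simp add: sg_def pcompose_const)
lemma sg_pow: "sg s (f ^ k) = sg s f ^ k" by (induction k) (simp_all add: sg_1 sg_mult)
lemma sg_neg: "sg s (- f) = - sg s f" by (simp add: sg_def pcompose_uminus)

lemma reindex_mod: assumes "coprime s p"
  shows "(\<Sum>k<p. g (s * k mod p)) = (\<Sum>m<p. g m)"
proof -
  let ?h = "\<lambda>k. s * k mod p"
  have inj: "inj_on ?h {..<p}"
  proof (rule inj_onI)
    fix k k' assume k: "k \<in> {..<p}" "k' \<in> {..<p}" and e: "?h k = ?h k'"
    then have "[s * k = s * k'] (mod p)" by (simp add: cong_def)
    then have "[k = k'] (mod p)" using cong_mult_lcancel_nat[OF assms] by simp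
    then show "k = k'" using k by (simp add: cong_def)
  qed
  have im: "?h ` {..<p} = {..<p}"
    by (rule endo_inj_surj[OF _ _ inj]) (use p2 in auto)
  have "(\<Sum>m<p. g m) = (\<Sum>m\<in>?h ` {..<p}. g m)" by (simp only: im)
  also have "\<dots> = (\<Sum>k<p. g (?h k))" by (simp add: sum.reindex[OF inj])
  finally show ?thesis by simp
qed

lemma cg_sg_Phi: assumes "coprime s p" shows "cg n (sg s Phi) Phi"
proof -
  have "sg s Phi = (\<Sum>k<p. monom 1 (s * k))" by (simp add: Phi_def sg_sum sg_monom)
  also have "cg n \<dots> (\<Sum>k<p. monom 1 (s * k mod p))" by (rule cg_sum) (rule cg_monom_mod)
  also have "(\<Sum>k<p. monom (1::int) (s * k mod p)) = Phi"
    unfolding Phi_def by (rule reindex_mod[OF assms])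
  finally show ?thesis .
qed

lemma cg_sg: assumes "coprime s p" and c: "cg n f g" shows "cg n (sg s f) (sg s g)"
proof -
  from c obtain q r where e: "f - g = smult (int p ^ n) q + Phi * r" by (rule cgE)
  have "sg s f - sg s g = smult (int p ^ n) (sg s q) + sg s Phi * sg s r"
    using arg_cong[OF e, of "sg s"] by (simp add: sg_diff sg_add sg_smult sg_mult)
  moreover have "cg n (smult (int p ^ n) (sg s q) + sg s Phi * sg s r) (0 + Phi * sg s r)"
    by (intro cg_add cg_mult cg_sg_Phi[OF assms(1)] cg_refl cg_pn)
  moreover have "cg n (0 + Phi * sg s r) 0" using cg_Phi by simp
  ultimately have "cg n (sg s f - sg s g) 0" using cg_trans by metis
  then show ?thesis by (rule cg_0I)
qed

lemma compat_sg: "coprime s p \<Longrightarrow> compat F \<Longrightarrow> compat (\<lambda>n. sg s (F n))"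
  unfolding compat_def by (auto intro: cg_sg)

lemma Pv_oadd: "cg n (Pv (oadd p x y) n) (Pv x n + Pv y n)"
proof -
  have "Pv (oadd p x y) n = (\<Sum>k<p-1. monom ((x n k + y n k) mod int p ^ n) k)"
    unfolding Pv_def oadd_def by (intro sum.cong refl) simp
  also have "cg n \<dots> (\<Sum>k<p-1. monom (x n k + y n k) k)" by (rule cg_sum_mod)
  also have "\<dots> = Pv x n + Pv y n" by (simp add: Pv_def add_monom[symmetric] sum.distrib)
  finally show ?thesis .
qed

lemma Pv_osub: "cg n (Pv (osub p x y) n) (Pv x n - Pv y n)"
proof -
  have "Pv (osub p x y) n = (\<Sum>k<p-1. monom ((x n k - y n k) mod int p ^ n) k)"
    unfolding Pv_def osub_def by (intro sum.cong refl) simp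
  also have "cg n \<dots> (\<Sum>k<p-1. monom (x n k - y n k) k)" by (rule cg_sum_mod)
  also have "\<dots> = Pv x n - Pv y n" by (simp add: Pv_def diff_monom[symmetric] sum_subtractf)
  finally show ?thesis .
qed

lemma Pv_omul: "cg n (Pv (omul p x y) n) (Pv x n * Pv y n)"
proof -
  let ?c = "oconv p x y n"
  have "Pv (omul p x y) n = (\<Sum>m<p-1. monom ((?c m - ?c (p-1)) mod int p ^ n) m)"
    unfolding Pv_def omul_def by (intro sum.cong refl) simp
  also have "cg n \<dots> (\<Sum>m<p. monom (?c m) m)" by (rule cg_cyc_red)
  also have "(\<Sum>m<p. monom (?c m) m) = (\<Sum>k<p-1. \<Sum>l<p-1. monom (x n k * y n l) ((k + l) mod p))"
    unfolding oconv_def by (rule cyc_sum2)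
  also have "cg n \<dots> (\<Sum>k<p-1. \<Sum>l<p-1. monom (x n k * y n l) (k + l))"
    by (intro cg_sum cg_cyc)
  also have "\<dots> = Pv x n * Pv y n"
    by (simp add: Pv_def sum_product mult_monom)
  finally show ?thesis .
qed

lemma sigma_cond: "((j * int k) mod int p = int m) \<longleftrightarrow> (nat (j mod int p) * k mod p = m)"
proof -
  have "(j * int k) mod int p = ((j mod int p) * int k) mod int p" by (simp add: mod_mult_left_eq)
  also have "j mod int p = int (nat (j mod int p))" using p2 by simp
  finally have "(j * int k) mod int p = int (nat (j mod int p) * k mod p)"
    by (simp add: of_nat_mod)
  then show ?thesis by simp
qed

lemma Pv_osigma: "cg n (Pv (osigma p j x) n) (sg (nat (j mod int p)) (Pv x n))"
proof -
  let ?s = "nat (j mod int p)"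
  let ?c = "osigma_coeff p j x n"
  have c: "?c m = (\<Sum>k<p-1. if ?s * k mod p = m then x n k else 0)" for m
    unfolding osigma_coeff_def by (simp add: sigma_cond)
  have "Pv (osigma p j x) n = (\<Sum>m<p-1. monom ((?c m - ?c (p-1)) mod int p ^ n) m)"
    unfolding Pv_def osigma_def by (intro sum.cong refl) simp
  also have "cg n \<dots> (\<Sum>m<p. monom (?c m) m)" by (rule cg_cyc_red)
  also have "(\<Sum>m<p. monom (?c m) m) = (\<Sum>k<p-1. monom (x n k) (?s * k mod p))"
    unfolding c by (rule cyc_sum)
  also have "cg n \<dots> (\<Sum>k<p-1. monom (x n k) (?s * k))" by (rule cg_cyc)
  also have "\<dots> = sg ?s (Pv x n)" by (simp add: Pv_def sg_sum sg_monom)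
  finally show ?thesis .
qed

lemma Pv_oone: "cg n (Pv (oone p) n) 1"
proof -
  have "Pv (oone p) n = (\<Sum>k<p-1. if k = 0 then monom (1 mod int p ^ n) k else 0)"
    unfolding Pv_def oone_def by (intro sum.cong refl) simp
  also have "\<dots> = monom (1 mod int p ^ n) 0" using p2 by (simp add: sum.delta)
  also have "cg n \<dots> (monom 1 0)" by (rule cg_mod_coeff)
  finally show ?thesis by (simp add: monom_0 one_pCons)
qed

lemma Pv_otheta: "cg n (Pv (otheta p) n) (monom 1 1)"
proof -
  have "Pv (otheta p) n = (\<Sum>k<p-1. if k = 1 then monom (1 mod int p ^ n) k else 0)"
    unfolding Pv_def otheta_def by (intro sum.cong refl) simp
  also have "\<dots> = monom (1 mod int p ^ n) 1" using p5 by (simp add: sum.delta)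
  also have "cg n \<dots> (monom 1 1)" by (rule cg_mod_coeff)
  finally show ?thesis .
qed

lemma redc_oadd: "redc (oadd p x y) n" using Ppos[of n] by (simp add: redc_def oadd_def)
lemma redc_osub: "redc (osub p x y) n" using Ppos[of n] by (simp add: redc_def osub_def)
lemma redc_omul: "redc (omul p x y) n" using Ppos[of n] by (simp add: redc_def omul_def)
lemma redc_osigma: "redc (osigma p j x) n" using Ppos[of n] by (simp add: redc_def osigma_def)
lemma redc_oone: "redc (oone p) n" using Ppos[of n] p2 by (simp add: redc_def oone_def)
lemma redc_otheta: "redc (otheta p) n" using Ppos[of n] p5 by (simp add: redc_def otheta_def)

lemma Ocar_by: assumes "\<And>n. redc w n" "\<And>n. cg n (Pv w n) (G n)" "compat G"
  shows "w \<in> Ocar p"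
proof (rule Ocar_intro[OF assms(1)])
  fix n
  have "cg n (Pv w (Suc n)) (G (Suc n))" using assms(2) cg_Suc by blast
  also have "cg n (G (Suc n)) (G n)" using assms(3) compat_def by blast
  also have "cg n (G n) (Pv w n)" by (rule cg_sym[OF assms(2)])
  finally show "cg n (Pv w (Suc n)) (Pv w n)" .
qed

lemma Ocar_oadd: "x \<in> Ocar p \<Longrightarrow> y \<in> Ocar p \<Longrightarrow> oadd p x y \<in> Ocar p"
  by (rule Ocar_by[OF redc_oadd Pv_oadd compat_add]) (simp_all add: Ocar_compat)
lemma Ocar_osub: "x \<in> Ocar p \<Longrightarrow> y \<in> Ocar p \<Longrightarrow> osub p x y \<in> Ocar p"
  by (rule Ocar_by[OF redc_osub Pv_osub compat_diff]) (simp_all add: Ocar_compat)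
lemma Ocar_omul: "x \<in> Ocar p \<Longrightarrow> y \<in> Ocar p \<Longrightarrow> omul p x y \<in> Ocar p"
  by (rule Ocar_by[OF redc_omul Pv_omul compat_mult]) (simp_all add: Ocar_compat)
lemma Ocar_oone: "oone p \<in> Ocar p"
  by (rule Ocar_by[OF redc_oone Pv_oone compat_const])
lemma Ocar_otheta: "otheta p \<in> Ocar p"
  by (rule Ocar_by[OF redc_otheta Pv_otheta compat_const])

lemma opow_Suc: "opow p x (Suc i) = omul p x (opow p x i)"
  by (simp add: opow_def)
lemma opow_0: "opow p x 0 = oone p"
  by (simp add: opow_def)

lemma Pv_opow: "cg n (Pv (opow p x i) n) (Pv x n ^ i)"
proof (induction i)
  case 0 then show ?case by (simp add: opow_0 Pv_oone)
next
  case (Suc i)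
  have "cg n (Pv (opow p x (Suc i)) n) (Pv x n * Pv (opow p x i) n)"
    unfolding opow_Suc by (rule Pv_omul)
  also have "cg n \<dots> (Pv x n * Pv x n ^ i)" by (rule cg_multl[OF Suc])
  finally show ?case by simp
qed

lemma redc_opow: "redc (opow p x i) n"
  by (cases i) (simp_all add: opow_0 opow_Suc redc_oone redc_omul)

lemma Ocar_opow: "x \<in> Ocar p \<Longrightarrow> opow p x i \<in> Ocar p"
  by (induction i) (simp_all add: opow_0 opow_Suc Ocar_oone Ocar_omul)

lemma cop_small: assumes "0 < s" "s < p" shows "coprime s p"
proof -
  have "\<not> p dvd s" using assms by (auto dest: dvd_imp_le)
  then show ?thesis using prime_imp_coprime[OF pp, of s] by (simp add: coprime_commute)
qed

definition pi1 :: "int poly" where "pi1 = 1 - monom 1 1"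
definition Es :: "nat \<Rightarrow> int poly" where "Es s = (\<Sum>k<s. monom 1 k)"

lemma sg_pi: "sg s pi1 = pi1 * Es s"
proof -
  have "(\<lambda>i. monom (1::int) 1 ^ i) = monom 1" by (auto simp: monom_power)
  then have "monom (1::int) 1 ^ s - 1 = (monom 1 1 - 1) * Es s"
    using power_diff_1_eq[of "monom (1::int) 1" s] by (simp add: Es_def)
  then have "1 - monom (1::int) s = (1 - monom 1 1) * Es s"
    by (simp add: monom_power algebra_simps)
  then show ?thesis by (simp add: pi1_def sg_diff sg_1 sg_monom)
qed

lemma poly_Es: "poly (Es s) 1 = int s"
  by (simp add: Es_def poly_sum poly_monom)

lemma Pv_pi: "cg n (Pv (osub p (oone p) (otheta p)) n) pi1"
  unfolding pi1_def by (rule cg_trans[OF Pv_osub cg_diff[OF Pv_oone Pv_otheta]])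

lemma Ocar_pi: "osub p (oone p) (otheta p) \<in> Ocar p"
  by (intro Ocar_osub Ocar_oone Ocar_otheta)

lemma redc_zp: "redc (\<lambda>n k. if k < p - 1 then f n k mod int p ^ n else 0) n"
  using Ppos[of n] by (simp add: redc_def)

lemma Pv_zp: "cg n (Pv (\<lambda>n k. if k < p - 1 then (\<Sum>l<m. c l n * s l n k) mod int p ^ n else 0) n)
                  (\<Sum>l<m. smult (c l n) (Pv (s l) n))"
proof -
  have "Pv (\<lambda>n k. if k < p - 1 then (\<Sum>l<m. c l n * s l n k) mod int p ^ n else 0) n
     = (\<Sum>k<p-1. monom ((\<Sum>l<m. c l n * s l n k) mod int p ^ n) k)"
    unfolding Pv_def by (intro sum.cong refl) simp
  also have "cg n \<dots> (\<Sum>k<p-1. monom (\<Sum>l<m. c l n * s l n k) k)" by (rule cg_sum_mod)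
  also have "(\<Sum>k<p-1. monom (\<Sum>l<m. c l n * s l n k) k) = (\<Sum>l<m. smult (c l n) (Pv (s l) n))"
    by (simp add: Pv_def monom_sum smult_sum_right smult_monom sum.swap[of _ "{..<m}"])
  finally show ?thesis .
qed


definition dq :: "int poly \<Rightarrow> int poly" where
  "dq f = (SOME h. f = [:poly f 1:] + pi1 * h)"

lemma dq_eq: "f = [:poly f 1:] + pi1 * dq f"
proof -
  have "poly (f - [:poly f 1:]) 1 = 0" by simp
  then obtain q where q: "f - [:poly f 1:] = [:-1, 1:] * q" using poly_eq_0_iff_dvd[of "f - [:poly f 1:]" 1]
    by (auto elim: dvdE)
  have pe: "pi1 = - [:-1, 1:]" by (rule poly_eqI) (auto simp: pi1_def coeff_pCons coeff_1 split: nat.splits)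
  have "[:poly f 1:] + pi1 * (- q) = [:poly f 1:] + [:-1, 1:] * q" by (simp add: pe)
  also have "\<dots> = f" using q by (metis add.commute diff_add_cancel)
  finally have "f = [:poly f 1:] + pi1 * (- q)" by simp
  then show ?thesis unfolding dq_def by (rule someI)
qed

definition Dv :: "nat \<Rightarrow> oelt \<Rightarrow> nat \<Rightarrow> int poly" where
  "Dv s u n = (\<Sum>k<p-1. smult (u n k) (dq (monom 1 (s * k)) - dq (monom 1 k)))"

lemma monom_diff_dq: "monom (1::int) m - monom 1 k = pi1 * (dq (monom 1 m) - dq (monom 1 k))"
proof -
  have "monom (1::int) m = 1 + pi1 * dq (monom 1 m)" using dq_eq[of "monom 1 m"] by (simp add: poly_monom one_pCons)
  moreover have "monom (1::int) k = 1 + pi1 * dq (monom 1 k)" using dq_eq[of "monom 1 k"] by (simp add: poly_monom one_pCons)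
  ultimately show ?thesis by (simp add: algebra_simps)
qed

lemma sg_Pv: "sg s (Pv u n) = Pv u n + pi1 * Dv s u n"
proof -
  have "sg s (Pv u n) - Pv u n = (\<Sum>k<p-1. smult (u n k) (monom 1 (s * k) - monom 1 k))"
    by (simp add: Pv_lin sg_sum sg_smult sg_monom sum_subtractf[symmetric] smult_diff_right)
  also have "\<dots> = pi1 * Dv s u n"
    by (simp add: Dv_def monom_diff_dq sum_distrib_left)
  finally show ?thesis by (simp add: algebra_simps)
qed

lemma compat_Dv: "u \<in> Ocar p \<Longrightarrow> compat (Dv s u)"
  unfolding Dv_def[abs_def] by (rule compat_lin)

lemma Pv_ideal_elem: "cg n (Pv (omul p (opow p (osub p (oone p) (otheta p)) i) u) n) (pi1 ^ i * Pv u n)"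
  by (rule cg_trans[OF Pv_omul cg_mult[OF cg_trans[OF Pv_opow cg_pow[OF Pv_pi]] cg_refl]])

lemma poly_Phi: "poly Phi 1 = int p"
  by (simp add: Phi_def poly_sum poly_monom)


lemma pi1_mult: "pi1 * f = f - pCons 0 f"
proof -
  have "monom (1::int) 1 * f = pCons 0 f" by (simp add: One_nat_def monom_Suc monom_0 mult_pCons_left)
  then show ?thesis by (simp add: pi1_def algebra_simps)
qed

lemma coeff_pi_pow: "coeff (pi1 ^ n) k = (-1) ^ k * int (n choose k)"
proof (induction n arbitrary: k)
  case 0 then show ?case by simp
next
  case (Suc n)
  show ?case
  proof (cases k)
    case 0 then show ?thesis using Suc[of 0] by (simp add: pi1_mult)
  next
    case (Suc k')
    then show ?thesis using Suc.IH[of k] Suc.IH[of k'] by (simp add: pi1_mult algebra_simps)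
  qed
qed

lemma choose_alt: "k < p \<Longrightarrow> int p dvd (-1) ^ k * int ((p - 1) choose k) - 1"
proof (induction k)
  case 0 then show ?case by simp
next
  case (Suc k)
  have pe: "p = Suc (p - 1)" using p2 by simp
  have "p choose Suc k = ((p - 1) choose k) + ((p - 1) choose Suc k)"
    by (subst pe) (rule binomial_Suc_Suc)
  moreover have "p dvd (p choose Suc k)" using Suc.prems pp by (intro dvd_choose_prime) auto
  then obtain w where w: "int (p choose Suc k) = int p * w" by (metis dvd_def of_nat_mult)
  ultimately have e: "int ((p - 1) choose Suc k) = int p * w - int ((p - 1) choose k)" by simp
  from Suc.IH Suc.prems obtain v where v: "(-1) ^ k * int ((p - 1) choose k) - 1 = int p * v"
    by (auto elim: dvdE)
  define C1 where "C1 = int ((p - 1) choose k)"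
  define C2 where "C2 = int ((p - 1) choose Suc k)"
  define sg1 :: int where "sg1 = (-1) ^ k"
  have e': "C2 = int p * w - C1" using e by (simp add: C1_def C2_def)
  have v': "sg1 * C1 = int p * v + 1" using v unfolding C1_def sg1_def by linarith
  have "(-1) ^ Suc k * C2 - 1 = - (sg1 * (int p * w)) + sg1 * C1 - 1" unfolding sg1_def e' by (simp add: algebra_simps)
  also have "\<dots> = int p * ((-1) ^ Suc k * w + v)"
  proof -
    have sgS: "(-1) ^ Suc k = - sg1" by (simp add: sg1_def)
    have "int p * ((-1) ^ Suc k * w + v) = - (sg1 * (int p * w)) + int p * v" unfolding sgS by (simp add: algebra_simps)
    then show ?thesis using v' by linarith
  qed
  finally show ?case by (simp add: C2_def)
qed

lemma smult_exists: fixes f :: "int poly" assumes "\<And>k. d dvd coeff f k" shows "\<exists>h. f = smult d h"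
proof
  show "f = smult d (map_poly (\<lambda>c. c div d) f)"
    by (rule poly_eqI) (simp add: coeff_map_poly assms)
qed

lemma pi_pow_p: "\<exists>h. pi1 ^ (p - 1) = Phi + smult (int p) h"
proof -
  have "int p dvd coeff (pi1 ^ (p - 1) - Phi) k" for k
  proof (cases "k < p")
    case True then show ?thesis using choose_alt[of k] by (simp add: coeff_pi_pow coeff_Phi)
  next
    case False
    then have "p - 1 < k" using p2 by simp
    then show ?thesis by (simp add: coeff_pi_pow coeff_Phi binomial_eq_0)
  qed
  then obtain h where "pi1 ^ (p - 1) - Phi = smult (int p) h" using smult_exists by blast
  then have "pi1 ^ (p - 1) = smult (int p) h + Phi" by (metis diff_add_cancel)
  then show ?thesis by (metis add.commute)
qed

lemma cg_pi_nil: "cg n (pi1 ^ (n * (p - 1))) 0"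
proof -
  obtain h where h: "pi1 ^ (p - 1) = Phi + smult (int p) h" using pi_pow_p by blast
  have "cg n (pi1 ^ (p - 1)) (smult (int p) h)"
    by (rule cgI[of _ _ _ 0 1]) (subst h, simp)
  then have "cg n ((pi1 ^ (p - 1)) ^ n) (smult (int p) h ^ n)" by (rule cg_pow)
  also have "smult (int p) h ^ n = smult (int p ^ n) (h ^ n)" by (simp add: smult_power)
  also have "cg n \<dots> 0" by (rule cg_pn)
  finally show ?thesis by (simp add: power_mult[symmetric] mult.commute)
qed

lemma geom: "(\<Sum>k<N. (d::int poly) ^ k) * (1 - d) = 1 - d ^ N"
  using power_diff_1_eq[of d N] by (simp add: algebra_simps)

lemma inv_family:
  assumes cop: "coprime (poly U0 1) (int p)"
  shows "\<exists>V. compat V \<and> (\<forall>n. cg n (V n * U0) 1)"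
proof -
  let ?c = "poly U0 1"
  have "\<forall>n. \<exists>c'. [?c * c' = 1] (mod (int p ^ n))"
    using cop by (intro allI cong_solve_coprime_int) simp
  then obtain ci where ci: "\<And>n. [?c * ci n = 1] (mod (int p ^ n))" by metis
  define dl where "dl n = 1 - smult (ci n) U0" for n
  define V where "V n = smult (ci n) (\<Sum>k<n * (p - 1). dl n ^ k)" for n
  have VU: "cg n (V n * U0) 1" for n
  proof -
    have "V n * U0 = (\<Sum>k<n * (p - 1). dl n ^ k) * (1 - dl n)"
      by (simp add: V_def dl_def mult_smult_left mult_smult_right)
    also have "\<dots> = 1 - dl n ^ (n * (p - 1))" by (rule geom)
    also have "cg n \<dots> (1 - 0)"
    proof (rule cg_diff[OF cg_refl])
      from ci[of n] obtain t where t: "1 - ?c * ci n = int p ^ n * t"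
        by (metis cong_iff_dvd_diff dvd_def cong_sym)
      have "dl n = smult (int p ^ n) [:t:] + pi1 * (- smult (ci n) (dq U0))"
      proof -
        have "dl n = 1 - smult (ci n) ([:?c:] + pi1 * dq U0)"
          unfolding dl_def by (subst dq_eq[of U0]) simp
        also have "\<dots> = [:1 - ?c * ci n:] + pi1 * (- smult (ci n) (dq U0))"
          by (simp add: smult_add_right algebra_simps one_pCons)
        finally show ?thesis by (simp add: t)
      qed
      then have "cg n (dl n) (pi1 * (- smult (ci n) (dq U0)))"
        by (intro cgI[of _ _ _ "[:t:]" 0]) simp
      then have "cg n (dl n ^ (n * (p - 1))) (pi1 ^ (n * (p - 1)) * (- smult (ci n) (dq U0)) ^ (n * (p - 1)))"
        by (metis cg_pow power_mult_distrib)
      also have "cg n \<dots> (0 * (- smult (ci n) (dq U0)) ^ (n * (p - 1)))"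
        by (intro cg_mult cg_pi_nil cg_refl)
      finally show "cg n (dl n ^ (n * (p - 1))) 0" by simp
    qed
    finally show ?thesis by simp
  qed
  have "compat V" unfolding compat_def
  proof
    fix n
    have "cg n (V (Suc n)) (V (Suc n) * (V n * U0))" using cg_multl[OF VU[of n], of "V (Suc n)"] by (simp add: cg_sym)
    also have "V (Suc n) * (V n * U0) = (V (Suc n) * U0) * V n" by (simp add: algebra_simps)
    also have "cg n \<dots> (1 * V n)" by (intro cg_mult cg_Suc[OF VU] cg_refl)
    finally show "cg n (V (Suc n)) (V n)" by simp
  qed
  with VU show ?thesis by blast
qed

lemma sum_split_add: "(\<Sum>l<(A::nat) + (B::nat). f l) = (\<Sum>l<A. f l) + (\<Sum>l<B. f (A + l))"
  by (induction B) (simp_all add: add.assoc)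

lemma zp_lin: assumes "Q \<in> Ocar p" shows "(\<lambda>n. (d * Q n k) mod int p ^ n) \<in> Zp p"
  unfolding Zp_def
proof (intro CollectI allI conjI)
  fix n
  show "0 \<le> (d * Q n k) mod int p ^ n" "(d * Q n k) mod int p ^ n < int p ^ n" using Ppos[of n] by simp_all
  have dv: "int p ^ n dvd int p ^ Suc n" by simp
  have q: "Q (Suc n) k mod int p ^ n = Q n k" using assms unfolding Ocar_def by blast
  have "(d * Q (Suc n) k) mod int p ^ Suc n mod int p ^ n = (d * Q (Suc n) k) mod int p ^ n"
    by (rule mod_mod_cancel[OF dv])
  also have "\<dots> = (d * (Q (Suc n) k mod int p ^ n)) mod int p ^ n" by (simp add: mod_mult_right_eq)
  finally show "(d * Q (Suc n) k) mod int p ^ Suc n mod int p ^ n = (d * Q n k) mod int p ^ n" by (simp add: q)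
qed

lemma cg_smult_mod: "cg n (smult (x mod int p ^ n) f) (smult x f)"
proof -
  have "smult (x mod int p ^ n) f - smult x f = smult (int p ^ n) (smult (- (x div int p ^ n)) f)"
    by (simp add: smult_diff_left[symmetric] minus_div_mult_eq_mod[symmetric] algebra_simps)
  then show ?thesis by (intro cgI[of _ _ _ "smult (- (x div int p ^ n)) f" 0]) simp
qed

lemma span_sup:
  assumes G: "\<And>l. l < p - 1 \<Longrightarrow> ga l \<in> G \<and> gb l \<in> G"
    and hyp: "\<And>n l. l < p - 1 \<Longrightarrow> cg n (smult da (Pv (ga l) n) + smult db (Pv (gb l) n)) (pi1 ^ e * monom 1 l * Uz)"
    and cop: "coprime (poly Uz 1) (int p)"
  shows "oideal p e \<subseteq> zp_span p G"
proof
  fix z assume "z \<in> oideal p e"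
  then obtain y where y: "y \<in> Ocar p" "z = omul p (opow p (osub p (oone p) (otheta p)) e) y"
    by (auto simp: oideal_def)
  obtain V where V: "compat V" "\<And>n. cg n (V n * Uz) 1" using inv_family[OF cop] by blast
  define Q where "Q = mkv (\<lambda>n. V n * Pv y n)"
  have Q: "Q \<in> Ocar p" unfolding Q_def by (intro mkv_Ocar compat_mult V Ocar_compat y)
  define A where "A = p - 1"
  define c where "c l n = (if l < A then (da * Q n l) mod int p ^ n else (db * Q n (l - A)) mod int p ^ n)" for l n
  define s where "s l = (if l < A then ga l else gb (l - A))" for l
  have cs: "\<forall>l<A + A. c l \<in> Zp p \<and> s l \<in> G"
  proof (intro allI impI conjI)
    fix l assume l: "l < A + A"
    show "c l \<in> Zp p" by (cases "l < A") (simp_all add: c_def[abs_def] zp_lin[OF Q])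
    show "s l \<in> G" using G l by (cases "l < A") (auto simp: s_def A_def)
  qed
  define w where "w = (\<lambda>n k. if k < p - 1 then (\<Sum>l<A + A. c l n * s l n k) mod int p ^ n else 0)"
  have "z = w"
  proof (rule eq_by_cg)
    show "redc z n" for n unfolding y by (rule redc_omul)
    show "redc w n" for n unfolding w_def by (rule redc_zp)
    fix n
    have "cg n (Pv z n) (pi1 ^ e * Pv y n)" unfolding y by (rule Pv_ideal_elem)
    also have "cg n (pi1 ^ e * Pv y n) (pi1 ^ e * ((V n * Uz) * Pv y n))"
    proof -
      have "cg n (V n * Uz * Pv y n) (Pv y n)" using cg_mult[OF V(2) cg_refl, of n "Pv y n"] by simp
      then show ?thesis by (intro cg_multl) (rule cg_sym)
    qed
    also have "pi1 ^ e * ((V n * Uz) * Pv y n) = pi1 ^ e * Uz * (V n * Pv y n)" by (simp add: algebra_simps)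
    also have "cg n \<dots> (pi1 ^ e * Uz * Pv Q n)" unfolding Q_def by (intro cg_multl cg_sym[OF Pv_mkv])
    also have "pi1 ^ e * Uz * Pv Q n = (\<Sum>l<A. smult (Q n l) (pi1 ^ e * monom 1 l * Uz))"
      by (simp add: Pv_lin A_def sum_distrib_left algebra_simps)
    also have "cg n \<dots> (\<Sum>l<A. smult (Q n l) (smult da (Pv (ga l) n) + smult db (Pv (gb l) n)))"
      by (intro cg_sum cg_smult cg_sym[OF hyp]) (simp add: A_def)
    also have "\<dots> = (\<Sum>l<A. smult (da * Q n l) (Pv (ga l) n)) + (\<Sum>l<A. smult (db * Q n l) (Pv (gb l) n))"
      by (simp add: sum.distrib smult_add_right mult.commute)
    also have "cg n \<dots> ((\<Sum>l<A. smult (c l n) (Pv (s l) n)) + (\<Sum>l<A. smult (c (A + l) n) (Pv (s (A + l)) n)))"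
      by (intro cg_add cg_sum) (simp_all add: c_def s_def cg_sym[OF cg_smult_mod])
    also have "\<dots> = (\<Sum>l<A + A. smult (c l n) (Pv (s l) n))" by (rule sum_split_add[symmetric])
    also have "cg n \<dots> (Pv w n)" unfolding w_def by (rule cg_sym[OF Pv_zp])
    finally show "cg n (Pv z n) (Pv w n)" .
  qed
  then show "z \<in> zp_span p G" unfolding zp_span_def w_def using cs by blast
qed

abbreviation "PI \<equiv> osub p (oone p) (otheta p)"

lemma cg_monom_eqmod: "k mod p = k' mod p \<Longrightarrow> cg n (monom c k) (monom c k')"
  by (metis cg_monom_mod cg_sym cg_trans)

lemma Pv_othpow: "cg n (Pv (opow p (otheta p) l) n) (monom 1 l)"
proof -
  have "cg n (Pv (opow p (otheta p) l) n) (monom 1 1 ^ l)" by (rule cg_trans[OF Pv_opow cg_pow[OF Pv_otheta]])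
  then show ?thesis by (simp add: monom_power)
qed

lemma ideal_gen: "omul p (opow p PI i) (opow p (otheta p) l) \<in> oideal p i"
  unfolding oideal_def mem_Collect_eq
  by (rule exI[of _ "opow p (otheta p) l"]) (simp add: Ocar_opow Ocar_otheta)

lemma one_minus_X: "1 - monom 1 s = pi1 * Es s"
  using sg_pi[of s] by (simp add: pi1_def sg_diff sg_1 sg_monom)

lemma ord_int: "ord (int m) (int y) = ord m y"
proof -
  have e: "[int y ^ d = 1] (mod int m) \<longleftrightarrow> [y ^ d = 1] (mod m)" for d
    by (metis cong_int_iff of_nat_power of_nat_1)
  show ?thesis unfolding ord_def by (simp add: e)
qed

lemma int_prime: "prime (int p)" using pp by simp

lemma cop_int: "0 < s \<Longrightarrow> s < p \<Longrightarrow> coprime (int s) (int p)"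
  using cop_small by simp

context
  fixes a :: int
  assumes a2: "2 \<le> a" and ap: "a \<le> (int p - 1) div 2"
begin

definition sa :: nat where "sa = nat a"
definition sb :: nat where "sb = p + 1 - nat a"

lemma a_lt: "2 * a \<le> int p - 1"
  using ap by linarith

lemma sa_mod: "nat (a mod int p) = sa"
proof -
  have "a mod int p = a" using a2 a_lt by (intro mod_pos_pos_trivial) auto
  then show ?thesis by (simp add: sa_def)
qed

lemma sb_mod: "nat ((1 - a) mod int p) = sb"
proof -
  have "(1 - a) mod int p = (1 - a + int p) mod int p" by simp
  also have "\<dots> = 1 - a + int p" using a2 a_lt by (intro mod_pos_pos_trivial) auto
  finally show ?thesis using a2 a_lt by (simp add: sb_def nat_diff_distrib)
qed

lemma sab: "sa + sb = p + 1" "2 \<le> sa" "sa < sb" "sb < p" "int sa = a" "int sb = int p + 1 - a"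
  using a2 a_lt by (auto simp: sa_def sb_def)

lemma cop_sa: "coprime sa p" using sab by (intro cop_small) auto
lemma cop_sb: "coprime sb p" using sab by (intro cop_small) auto
lemma cop_sba: "coprime (sb - sa) p" using sab by (intro cop_small) auto

definition th :: "int poly \<Rightarrow> int poly \<Rightarrow> int poly" where
  "th f g = sg sa f * sg sb g - sg sb f * sg sa g"

lemma cg_th: "cg n f f' \<Longrightarrow> cg n g g' \<Longrightarrow> cg n (th f g) (th f' g')"
  unfolding th_def by (intro cg_diff cg_mult cg_sg cop_sa cop_sb)

lemma compat_th: "compat F \<Longrightarrow> compat G \<Longrightarrow> compat (\<lambda>n. th (F n) (G n))"
  unfolding compat_def by (auto intro: cg_th)

lemma Pv_vartheta: "cg n (Pv (vartheta p a x y) n) (th (Pv x n) (Pv y n))"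
proof -
  have "cg n (Pv (vartheta p a x y) n)
     (Pv (osigma p a x) n * Pv (osigma p (1 - a) y) n - Pv (osigma p (1 - a) x) n * Pv (osigma p a y) n)"
    unfolding vartheta_def by (rule cg_trans[OF Pv_osub cg_diff[OF Pv_omul Pv_omul]])
  also have "cg n \<dots> (th (Pv x n) (Pv y n))"
    unfolding th_def using Pv_osigma[of n a] Pv_osigma[of n "1 - a"]
    by (intro cg_diff cg_mult) (simp_all add: sa_mod sb_mod)
  finally show ?thesis .
qed

lemma redc_vartheta: "redc (vartheta p a x y) n"
  by (simp add: vartheta_def redc_osub)

lemma ring_id4: "((A::int poly) * F) * (B * G) - (B * F') * (A * G') = (A * B) * (F * G - F' * G')"
  by (simp add: algebra_simps)

lemma th_X: "th (monom 1 1 * f) (monom 1 1 * g) = monom 1 (p + 1) * th f g"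
proof -
  have e: "monom (1::int) sa * monom 1 sb = monom 1 (p + 1)" by (simp add: mult_monom sab(1))
  have "th (monom 1 1 * f) (monom 1 1 * g)
     = (monom 1 sa * sg sa f) * (monom 1 sb * sg sb g) - (monom 1 sb * sg sb f) * (monom 1 sa * sg sa g)"
    unfolding th_def sg_mult sg_monom by simp
  also have "\<dots> = (monom 1 sa * monom 1 sb) * th f g" unfolding th_def by (rule ring_id4)
  finally show ?thesis by (simp only: e)
qed

lemma claim3: "vartheta p a (omul p (otheta p) x) (omul p (otheta p) y) = omul p (otheta p) (vartheta p a x y)"
proof (rule eq_by_cg[OF redc_vartheta redc_omul])
  fix n
  have "cg n (Pv (vartheta p a (omul p (otheta p) x) (omul p (otheta p) y)) n)
     (th (Pv (omul p (otheta p) x) n) (Pv (omul p (otheta p) y) n))" by (rule Pv_vartheta)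
  also have "cg n \<dots> (th (monom 1 1 * Pv x n) (monom 1 1 * Pv y n))"
    by (intro cg_th cg_trans[OF Pv_omul] cg_mult Pv_otheta cg_refl)
  also have "\<dots> = monom 1 (p + 1) * th (Pv x n) (Pv y n)" by (rule th_X)
  also have "cg n \<dots> (monom 1 1 * th (Pv x n) (Pv y n))"
  proof -
    have "(1 + p) mod p = 1" using p2 by (simp only: mod_add_self2) simp
    then show ?thesis using cg_monom_mod[of n 1 "p + 1"] by (intro cg_mult) (auto simp: add.commute)
  qed
  also have "cg n \<dots> (Pv (otheta p) n * Pv (vartheta p a x y) n)"
    by (intro cg_mult cg_sym[OF Pv_otheta] cg_sym[OF Pv_vartheta])
  also have "cg n \<dots> (Pv (omul p (otheta p) (vartheta p a x y)) n)" by (rule cg_sym[OF Pv_omul])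
  finally show "cg n (Pv (vartheta p a (omul p (otheta p) x) (omul p (otheta p) y)) n)
       (Pv (omul p (otheta p) (vartheta p a x y)) n)" .
qed

definition AA :: "nat \<Rightarrow> nat \<Rightarrow> int poly" where "AA i j = Es sa ^ i * Es sb ^ j"
definition BB :: "nat \<Rightarrow> nat \<Rightarrow> int poly" where "BB i j = Es sb ^ i * Es sa ^ j"
definition Br :: "nat \<Rightarrow> nat \<Rightarrow> int poly \<Rightarrow> int poly \<Rightarrow> int poly" where
  "Br i j f g = AA i j * sg sa f * sg sb g - BB i j * sg sb f * sg sa g"

lemma th_pi: "th (pi1 ^ i * f) (pi1 ^ j * g) = pi1 ^ (i + j) * Br i j f g"
  unfolding th_def Br_def AA_def BB_def
  by (simp add: sg_mult sg_pow sg_pi power_mult_distrib power_add algebra_simps)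

lemma poly_AA: "poly (AA i j) 1 = int sa ^ i * int sb ^ j"
  by (simp add: AA_def poly_Es)
lemma poly_BB: "poly (BB i j) 1 = int sb ^ i * int sa ^ j"
  by (simp add: BB_def poly_Es)

definition Brd :: "nat \<Rightarrow> nat \<Rightarrow> int \<Rightarrow> oelt \<Rightarrow> oelt \<Rightarrow> nat \<Rightarrow> int poly" where
  "Brd i j t u v n = AA i j * (Pv u n * Dv sb v n + Dv sa u n * Pv v n + pi1 * Dv sa u n * Dv sb v n
        - Pv u n * Dv sa v n - Dv sb u n * Pv v n - pi1 * Dv sb u n * Dv sa v n)
      + (dq (AA i j) - dq (BB i j) - smult t (dq Phi)) * sg sb (Pv u n) * sg sa (Pv v n)"

lemma Br_div:
  assumes t: "int sa ^ i * int sb ^ j - int sb ^ i * int sa ^ j = int p * t"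
  shows "Br i j (Pv u n) (Pv v n) = pi1 * Brd i j t u v n + Phi * smult t (sg sb (Pv u n) * sg sa (Pv v n))"
proof -
  define U where "U = Pv u n"
  define V where "V = Pv v n"
  define Da where "Da = Dv sa u n"
  define Db where "Db = Dv sb u n"
  define Ea where "Ea = Dv sa v n"
  define Eb where "Eb = Dv sb v n"
  define A where "A = AA i j"
  define B where "B = BB i j"
  have ua: "sg sa U = U + pi1 * Da" "sg sb U = U + pi1 * Db" "sg sa V = V + pi1 * Ea" "sg sb V = V + pi1 * Eb"
    by (simp_all add: U_def V_def Da_def Db_def Ea_def Eb_def sg_Pv)
  have A: "A = [:int sa ^ i * int sb ^ j:] + pi1 * dq A" using dq_eq[of A] by (simp add: A_def poly_AA)
  have B: "B = [:int sb ^ i * int sa ^ j:] + pi1 * dq B" using dq_eq[of B] by (simp add: B_def poly_BB)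
  have P: "[:int p:] = Phi - pi1 * dq Phi" using dq_eq[of Phi] by (simp add: poly_Phi)
  have AB: "A - B = smult t Phi - pi1 * smult t (dq Phi) + pi1 * (dq A - dq B)"
  proof -
    have c: "[:int sa ^ i * int sb ^ j:] = [:int sb ^ i * int sa ^ j:] + [:int p * t:]"
      using t by (simp add: algebra_simps)
    have "A - B = ([:int sa ^ i * int sb ^ j:] + pi1 * dq A) - ([:int sb ^ i * int sa ^ j:] + pi1 * dq B)"
      by (rule arg_cong2[where f = minus, OF A B])
    also have "\<dots> = [:int p * t:] + pi1 * (dq A - dq B)"
      by (simp only: c) (simp add: algebra_simps)
    also have "[:int p * t:] = smult t [:int p:]" by simp
    also have "\<dots> = smult t Phi - pi1 * smult t (dq Phi)" by (simp add: P smult_diff_right)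
    finally show ?thesis .
  qed
  have "Br i j U V = A * (sg sa U * sg sb V - sg sb U * sg sa V) + (A - B) * sg sb U * sg sa V"
    by (simp add: Br_def A_def B_def algebra_simps)
  also have "sg sa U * sg sb V - sg sb U * sg sa V = pi1 * (U * Eb + Da * V + pi1 * Da * Eb
        - U * Ea - Db * V - pi1 * Db * Ea)"
    by (simp add: ua algebra_simps)
  finally have "Br i j U V = pi1 * (A * (U * Eb + Da * V + pi1 * Da * Eb - U * Ea - Db * V - pi1 * Db * Ea)
      + (dq A - dq B - smult t (dq Phi)) * sg sb U * sg sa V) + Phi * smult t (sg sb U * sg sa V)"
    by (simp add: AB algebra_simps)
  then show ?thesis
    by (simp add: Brd_def U_def V_def Da_def Db_def Ea_def Eb_def A_def B_def)
qed

lemma compat_Br: "u \<in> Ocar p \<Longrightarrow> v \<in> Ocar p \<Longrightarrow> compat (\<lambda>n. Br i j (Pv u n) (Pv v n))"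
  unfolding Br_def
  by (intro compat_diff compat_mult compat_const compat_sg cop_sa cop_sb Ocar_compat)

lemma compat_Brd: "u \<in> Ocar p \<Longrightarrow> v \<in> Ocar p \<Longrightarrow> compat (Brd i j t u v)"
  unfolding Brd_def[abs_def]
  by (intro compat_add compat_diff compat_mult compat_const compat_sg cop_sa cop_sb Ocar_compat compat_Dv)


lemma gen_in:
  assumes x: "x \<in> oideal p i" and y: "y \<in> oideal p j"
    and eps: "\<epsilon> = 1 \<Longrightarrow> int p dvd (int sa ^ i * int sb ^ j - int sb ^ i * int sa ^ j)"
    and e01: "\<epsilon> = 0 \<or> \<epsilon> = 1"
  shows "\<exists>Z. compat Z \<and> (\<forall>n. cg n (Pv (vartheta p a x y) n) (pi1 ^ (i + j + \<epsilon>) * Z n))"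
proof -
  obtain u where u: "u \<in> Ocar p" "x = omul p (opow p PI i) u" using x by (auto simp: oideal_def)
  obtain v where v: "v \<in> Ocar p" "y = omul p (opow p PI j) v" using y by (auto simp: oideal_def)
  have base: "cg n (Pv (vartheta p a x y) n) (pi1 ^ (i + j) * Br i j (Pv u n) (Pv v n))" for n
  proof -
    have "cg n (Pv (vartheta p a x y) n) (th (Pv x n) (Pv y n))" by (rule Pv_vartheta)
    also have "cg n \<dots> (th (pi1 ^ i * Pv u n) (pi1 ^ j * Pv v n))"
      unfolding u v by (intro cg_th Pv_ideal_elem)
    also have "\<dots> = pi1 ^ (i + j) * Br i j (Pv u n) (Pv v n)" by (rule th_pi)
    finally show ?thesis .
  qed
  show ?thesis
  proof (cases "\<epsilon> = 0")
    case True
    then show ?thesis using base compat_Br[OF u(1) v(1)] by auto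
  next
    case False
    with e01 have e1: "\<epsilon> = 1" by simp
    from eps[OF e1] obtain t where t: "int sa ^ i * int sb ^ j - int sb ^ i * int sa ^ j = int p * t"
      by (auto elim: dvdE)
    have "cg n (Pv (vartheta p a x y) n) (pi1 ^ (i + j + \<epsilon>) * Brd i j t u v n)" for n
    proof -
      have "cg n (Pv (vartheta p a x y) n) (pi1 ^ (i + j) * Br i j (Pv u n) (Pv v n))" by (rule base)
      also have "\<dots> = pi1 ^ (i + j + \<epsilon>) * Brd i j t u v n
           + Phi * (pi1 ^ (i + j) * smult t (sg sb (Pv u n) * sg sa (Pv v n)))"
        by (simp add: Br_div[OF t] e1 algebra_simps)
      also have "cg n \<dots> (pi1 ^ (i + j + \<epsilon>) * Brd i j t u v n + 0)"
        by (intro cg_add cg_refl cg_Phi)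
      finally show ?thesis by simp
    qed
    then show ?thesis using compat_Brd[OF u(1) v(1)] by blast
  qed
qed

lemma span_sub:
  assumes eps: "\<epsilon> = 1 \<Longrightarrow> int p dvd (int sa ^ i * int sb ^ j - int sb ^ i * int sa ^ j)"
    and e01: "\<epsilon> = 0 \<or> \<epsilon> = 1"
  shows "zp_span p {vartheta p a x y | x y. x \<in> oideal p i \<and> y \<in> oideal p j} \<subseteq> oideal p (i + j + \<epsilon>)"
proof
  fix z assume zin: "z \<in> zp_span p {vartheta p a x y | x y. x \<in> oideal p i \<and> y \<in> oideal p j}"
  obtain m :: nat and c :: "nat \<Rightarrow> nat \<Rightarrow> int" and s :: "nat \<Rightarrow> oelt" where cs: "\<forall>l<m. c l \<in> Zp p \<and> s l \<in> {vartheta p a x y | x y. x \<in> oideal p i \<and> y \<in> oideal p j}"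
    and z: "z = (\<lambda>n k. if k < p - 1 then (\<Sum>l<m. c l n * s l n k) mod int p ^ n else 0)"
    using CollectD[OF zin[unfolded zp_span_def]] by (elim exE conjE) blast
  let ?e = "i + j + \<epsilon>"
  have "\<forall>l. \<exists>Z. l < m \<longrightarrow> compat Z \<and> (\<forall>n. cg n (Pv (s l) n) (pi1 ^ ?e * Z n))"
  proof
    fix l
    show "\<exists>Z. l < m \<longrightarrow> compat Z \<and> (\<forall>n. cg n (Pv (s l) n) (pi1 ^ ?e * Z n))"
    proof (cases "l < m")
      case True
      then obtain x y where "x \<in> oideal p i" "y \<in> oideal p j" "s l = vartheta p a x y" using cs by blast
      then show ?thesis using gen_in[OF _ _ eps e01] by metis
    qed simp
  qed
  then obtain ZZ where ZZ: "\<And>l. l < m \<Longrightarrow> compat (ZZ l) \<and> (\<forall>n. cg n (Pv (s l) n) (pi1 ^ ?e * ZZ l n))"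
    by metis
  define H where "H n = (\<Sum>l<m. smult (c l n) (ZZ l n))" for n
  have cH: "compat H" unfolding H_def[abs_def]
    by (intro compat_sum compat_zp) (use ZZ cs in auto)
  have "z = omul p (opow p PI ?e) (mkv H)"
  proof (rule eq_by_cg)
    show "redc z n" for n unfolding z by (rule redc_zp)
    show "redc (omul p (opow p PI ?e) (mkv H)) n" for n by (rule redc_omul)
    fix n
    have "cg n (Pv z n) (\<Sum>l<m. smult (c l n) (Pv (s l) n))" unfolding z by (rule Pv_zp)
    also have "cg n \<dots> (\<Sum>l<m. smult (c l n) (pi1 ^ ?e * ZZ l n))"
      by (intro cg_sum cg_smult) (use ZZ in auto)
    also have "\<dots> = pi1 ^ ?e * H n" by (simp add: H_def sum_distrib_left)
    also have "cg n \<dots> (Pv (omul p (opow p PI ?e) (mkv H)) n)"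
      by (rule cg_sym[OF cg_trans[OF Pv_omul cg_mult[OF cg_trans[OF Pv_opow cg_pow[OF Pv_pi]] Pv_mkv]]])
    finally show "cg n (Pv z n) (Pv (omul p (opow p PI ?e) (mkv H)) n)" .
  qed
  then show "z \<in> oideal p ?e" unfolding oideal_def using mkv_Ocar[OF cH] by blast
qed

definition gen :: "nat \<Rightarrow> nat \<Rightarrow> nat \<Rightarrow> nat \<Rightarrow> oelt" where
  "gen i j l1 l2 = vartheta p a (omul p (opow p PI i) (opow p (otheta p) l1)) (omul p (opow p PI j) (opow p (otheta p) l2))"

lemma gen_in_set: "gen i j l1 l2 \<in> {vartheta p a x y | x y. x \<in> oideal p i \<and> y \<in> oideal p j}"
  unfolding gen_def using ideal_gen by blast

lemma Pv_gen: "cg n (Pv (gen i j l1 l2) n)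
   (pi1 ^ (i + j) * (AA i j * monom 1 (sa * l1 + sb * l2) - BB i j * monom 1 (sb * l1 + sa * l2)))"
proof -
  have "cg n (Pv (gen i j l1 l2) n) (th (Pv (omul p (opow p PI i) (opow p (otheta p) l1)) n) (Pv (omul p (opow p PI j) (opow p (otheta p) l2)) n))"
    unfolding gen_def by (rule Pv_vartheta)
  also have "cg n \<dots> (th (pi1 ^ i * monom 1 l1) (pi1 ^ j * monom 1 l2))"
    by (intro cg_th cg_trans[OF Pv_ideal_elem] cg_multl Pv_othpow)
  also have "\<dots> = pi1 ^ (i + j) * Br i j (monom 1 l1) (monom 1 l2)" by (rule th_pi)
  also have "Br i j (monom 1 l1) (monom 1 l2) = AA i j * monom 1 (sa * l1 + sb * l2) - BB i j * monom 1 (sb * l1 + sa * l2)"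
    by (simp add: Br_def sg_monom mult_monom algebra_simps)
  finally show ?thesis .
qed

lemma sab_mod: "(sa * l + sb * l) mod p = l mod p" "(sa * l + sb * (l + 1)) mod p = (l + sb) mod p"
    "(sb * l + sa * (l + 1)) mod p = (l + sa) mod p" "(sa * (l + sb) + sb * (l + sb)) mod p = (l + sb) mod p"
proof -
  have e: "sa + sb = p + 1" by (rule sab(1))
  have q: "(sa + sb) * m = m + p * m" for m by (simp only: e) simp
  have h1: "sa * l + sb * l = l + p * l" using q[of l] unfolding distrib_left distrib_right by linarith
  then show "(sa * l + sb * l) mod p = l mod p" by (simp only: mod_mult_self2)
  have h2: "sa * l + sb * (l + 1) = (l + sb) + p * l" using q[of l] unfolding distrib_left distrib_right by linarith
  then show "(sa * l + sb * (l + 1)) mod p = (l + sb) mod p" by (simp only: mod_mult_self2)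
  have h3: "sb * l + sa * (l + 1) = (l + sa) + p * l" using q[of l] unfolding distrib_left distrib_right by linarith
  then show "(sb * l + sa * (l + 1)) mod p = (l + sa) mod p" by (simp only: mod_mult_self2)
  have h4: "sa * (l + sb) + sb * (l + sb) = (l + sb) + p * (l + sb)" using q[of "l + sb"] unfolding distrib_left distrib_right by linarith
  then show "(sa * (l + sb) + sb * (l + sb)) mod p = (l + sb) mod p" by (simp only: mod_mult_self2)
qed

lemma sup_nondiv:
  assumes cop: "coprime (int sa ^ i * int sb ^ j - int sb ^ i * int sa ^ j) (int p)"
  shows "oideal p (i + j) \<subseteq> zp_span p {vartheta p a x y | x y. x \<in> oideal p i \<and> y \<in> oideal p j}"
proof (rule span_sup[where ga = "\<lambda>l. gen i j l l" and gb = "\<lambda>l. gen i j l l" and da = 1 and db = 0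
      and Uz = "AA i j - BB i j"])
  show "gen i j l l \<in> {vartheta p a x y | x y. x \<in> oideal p i \<and> y \<in> oideal p j} \<and> gen i j l l \<in> {vartheta p a x y | x y. x \<in> oideal p i \<and> y \<in> oideal p j}" for l using gen_in_set by blast
  show "coprime (poly (AA i j - BB i j) 1) (int p)" using cop by (simp add: poly_AA poly_BB)
  fix n l
  have "cg n (Pv (gen i j l l) n) (pi1 ^ (i + j) * (AA i j * monom 1 (sa * l + sb * l) - BB i j * monom 1 (sb * l + sa * l)))"
    by (rule Pv_gen)
  also have "\<dots> = pi1 ^ (i + j) * (AA i j - BB i j) * monom 1 (sa * l + sb * l)"
    by (simp add: algebra_simps)
  also have "cg n \<dots> (pi1 ^ (i + j) * (AA i j - BB i j) * monom 1 l)"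
    by (intro cg_multl cg_monom_eqmod sab_mod)
  finally show "cg n (smult 1 (Pv (gen i j l l) n) + smult 0 (Pv (gen i j l l) n)) (pi1 ^ (i + j) * monom 1 l * (AA i j - BB i j))"
    by (simp add: algebra_simps)
qed

lemma sup_div:
  shows "oideal p (i + j + 1) \<subseteq> zp_span p {vartheta p a x y | x y. x \<in> oideal p i \<and> y \<in> oideal p j}"
proof (rule span_sup[where ga = "\<lambda>l. gen i j l (l + 1)" and gb = "\<lambda>l. gen i j (l + sb) (l + sb)" and da = 1 and db = "-1"
      and Uz = "- (BB i j * monom 1 sa * Es (sb - sa))"])
  show "gen i j l (l + 1) \<in> {vartheta p a x y | x y. x \<in> oideal p i \<and> y \<in> oideal p j} \<and> gen i j (l + sb) (l + sb) \<in> {vartheta p a x y | x y. x \<in> oideal p i \<and> y \<in> oideal p j}" for l using gen_in_set by blast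
  have "coprime (int sb ^ i * int sa ^ j * int (sb - sa)) (int p)"
    using cop_int[of sb] cop_int[of sa] cop_int[of "sb - sa"] sab(2,3,4) by simp
  then show "coprime (poly (- (BB i j * monom 1 sa * Es (sb - sa))) 1) (int p)"
    by (simp add: poly_BB poly_Es poly_monom)
  fix n l
  let ?A = "AA i j" and ?B = "BB i j" and ?P = "pi1 ^ (i + j)"
  have "cg n (smult 1 (Pv (gen i j l (l + 1)) n) + smult (-1) (Pv (gen i j (l + sb) (l + sb)) n))
      (?P * (?A * monom 1 (sa * l + sb * (l + 1)) - ?B * monom 1 (sb * l + sa * (l + 1)))
       - ?P * (?A * monom 1 (sa * (l + sb) + sb * (l + sb)) - ?B * monom 1 (sb * (l + sb) + sa * (l + sb))))"
  proof -
    have "cg n (Pv (gen i j l (l + 1)) n - Pv (gen i j (l + sb) (l + sb)) n)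
      (?P * (?A * monom 1 (sa * l + sb * (l + 1)) - ?B * monom 1 (sb * l + sa * (l + 1)))
       - ?P * (?A * monom 1 (sa * (l + sb) + sb * (l + sb)) - ?B * monom 1 (sb * (l + sb) + sa * (l + sb))))"
      by (intro cg_diff Pv_gen)
    then show ?thesis by simp
  qed
  also have "?P * (?A * monom 1 (sa * l + sb * (l + 1)) - ?B * monom 1 (sb * l + sa * (l + 1)))
       - ?P * (?A * monom 1 (sa * (l + sb) + sb * (l + sb)) - ?B * monom 1 (sb * (l + sb) + sa * (l + sb)))
      = ?P * (?A * monom 1 (sa * l + sb * (l + 1)) - ?B * monom 1 (sb * l + sa * (l + 1)))
       - ?P * (?A - ?B) * monom 1 (sa * (l + sb) + sb * (l + sb))"
    by (simp add: algebra_simps)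
  also have "cg n \<dots> (?P * (?A * monom 1 (l + sb) - ?B * monom 1 (l + sa)) - ?P * (?A - ?B) * monom 1 (l + sb))"
    by (intro cg_diff cg_multl cg_monom_eqmod sab_mod)
  also have "\<dots> = ?P * ?B * (monom 1 (l + sb) - monom 1 (l + sa))" by (simp add: algebra_simps)
  also have "monom (1::int) (l + sb) - monom 1 (l + sa) = - (monom 1 l * monom 1 sa * (1 - monom 1 (sb - sa)))"
    using sab by (simp add: mult_monom algebra_simps)
  also have "\<dots> = - (monom 1 l * monom 1 sa * (pi1 * Es (sb - sa)))" by (simp add: one_minus_X)
  also have "?P * ?B * - (monom 1 l * monom 1 sa * (pi1 * Es (sb - sa)))
      = pi1 ^ (i + j + 1) * monom 1 l * - (?B * monom 1 sa * Es (sb - sa))"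
    by (simp add: algebra_simps)
  finally show "cg n (smult 1 (Pv (gen i j l (l + 1)) n) + smult (-1) (Pv (gen i j (l + sb) (l + sb)) n))
      (pi1 ^ (i + j + 1) * monom 1 l * - (?B * monom 1 sa * Es (sb - sa)))" .
qed

lemma ord_cond: "int (ord_a p a) dvd (int i - int j) \<longleftrightarrow> int p dvd (int sa ^ i * int sb ^ j - int sb ^ i * int sa ^ j)"
proof -
  define b where "b = 1 - a"
  have bm: "b mod int p = int sb" using sb_mod unfolding b_def
    by (metis Euclidean_Rings.pos_mod_sign nat_0_le of_nat_0_less_iff p2 less_le_trans zero_less_numeral nat_int)
  have copb: "coprime b (int p)"
  proof -
    have "coprime (b mod int p) (int p)" using bm cop_int[of sb] sab by simp
    then show ?thesis using p2 by simp
  qed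
  define iv where "iv = modular_inverse (int p) b"
  have hb: "[b * iv = 1] (mod int p)" unfolding iv_def by (rule cong_modular_inverse1[OF copb])
  define x where "x = (a * iv) mod int p"
  have x0: "x \<ge> 0" using p2 by (simp add: x_def)
  define x0 where "x0 = nat x"
  have ix: "int x0 = x" using x0 by (simp add: x0_def)
  have oa: "ord_a p a = ord p x0"
    by (simp add: ord_a_def x_def[symmetric] iv_def[symmetric] b_def[symmetric] ix[symmetric] ord_int)
  have xb: "[x * b = a] (mod int p)"
  proof -
    have "[x * b = (a * iv) * b] (mod int p)" unfolding x_def by (simp add: cong_def mod_mult_left_eq)
    also have "[(a * iv) * b = a * 1] (mod int p)"
      using cong_scalar_left[OF hb, of a] by (simp add: algebra_simps)
    finally show ?thesis by simp
  qed
  have key: "[x ^ d = 1] (mod int p) \<longleftrightarrow> [int sa ^ d = int sb ^ d] (mod int p)" for d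
  proof -
    have "[x ^ d * b ^ d = a ^ d] (mod int p)" using cong_pow[OF xb, of d] by (simp add: power_mult_distrib)
    moreover have "[b ^ d = int sb ^ d] (mod int p)"
    proof -
      have "int sb mod int p = int sb" using sab(4) by (intro mod_pos_pos_trivial) auto
      then show ?thesis using bm by (intro cong_pow) (simp add: cong_def)
    qed
    ultimately have c1: "[x ^ d * b ^ d = int sa ^ d] (mod int p)" using sab by simp
    have cb: "coprime (b ^ d) (int p)" using copb by simp
    have "[x ^ d = 1] (mod int p) \<longleftrightarrow> [x ^ d * b ^ d = 1 * b ^ d] (mod int p)"
      by (rule cong_mult_rcancel[OF cb, symmetric])
    also have "\<dots> \<longleftrightarrow> [int sa ^ d = b ^ d] (mod int p)"
      using c1 by (metis cong_sym cong_trans mult_1)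
    also have "\<dots> \<longleftrightarrow> [int sa ^ d = int sb ^ d] (mod int p)"
      using \<open>[b ^ d = int sb ^ d] (mod int p)\<close> by (metis cong_sym cong_trans)
    finally show ?thesis .
  qed
  have ordd: "ord p x0 dvd d \<longleftrightarrow> [int sa ^ d = int sb ^ d] (mod int p)" for d
  proof -
    have "ord p x0 dvd d \<longleftrightarrow> [x0 ^ d = 1] (mod p)" by (rule ord_divides[symmetric])
    also have "\<dots> \<longleftrightarrow> [x ^ d = 1] (mod int p)" by (metis cong_int_iff of_nat_power of_nat_1 ix)
    finally show ?thesis using key by simp
  qed
  have cs: "coprime (int p) ((int sa * int sb) ^ k)" for k
    using cop_int[of sa] cop_int[of sb] sab by (simp add: coprime_commute)
  show ?thesis
  proof (cases "j \<le> i")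
    case True
    define d where "d = i - j"
    have i: "i = j + d" using True by (simp add: d_def)
    have "int (ord_a p a) dvd (int i - int j) \<longleftrightarrow> ord p x0 dvd d"
      by (simp add: oa i)
    also have "\<dots> \<longleftrightarrow> int p dvd (int sa ^ d - int sb ^ d)" by (simp add: ordd cong_iff_dvd_diff)
    also have "\<dots> \<longleftrightarrow> int p dvd ((int sa * int sb) ^ j * (int sa ^ d - int sb ^ d))"
      by (rule coprime_dvd_mult_right_iff[OF cs, symmetric])
    also have "(int sa * int sb) ^ j * (int sa ^ d - int sb ^ d) = int sa ^ i * int sb ^ j - int sb ^ i * int sa ^ j"
      by (simp add: i power_add power_mult_distrib algebra_simps)
    finally show ?thesis .
  next
    case False
    define d where "d = j - i"
    have j: "j = i + d" using False by (simp add: d_def)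
    have "int (ord_a p a) dvd (int i - int j) \<longleftrightarrow> ord p x0 dvd d"
      by (simp add: oa j)
    also have "\<dots> \<longleftrightarrow> int p dvd (int sb ^ d - int sa ^ d)" by (simp add: ordd cong_iff_dvd_diff dvd_diff_commute)
    also have "\<dots> \<longleftrightarrow> int p dvd ((int sa * int sb) ^ i * (int sb ^ d - int sa ^ d))"
      by (rule coprime_dvd_mult_right_iff[OF cs, symmetric])
    also have "(int sa * int sb) ^ i * (int sb ^ d - int sa ^ d) = int sa ^ i * int sb ^ j - int sb ^ i * int sa ^ j"
      by (simp add: j power_add power_mult_distrib algebra_simps)
    finally show ?thesis .
  qed
qed

lemma claim1: "zp_span p {vartheta p a x y | x y. x \<in> oideal p i \<and> y \<in> oideal p j}
             = oideal p (i + j + (if int (ord_a p a) dvd (int i - int j) then 1 else 0))"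
proof (cases "int (ord_a p a) dvd (int i - int j)")
  case True
  then have d: "int p dvd (int sa ^ i * int sb ^ j - int sb ^ i * int sa ^ j)" using ord_cond by simp
  have "zp_span p {vartheta p a x y | x y. x \<in> oideal p i \<and> y \<in> oideal p j} \<subseteq> oideal p (i + j + 1)"
    by (rule span_sub) (use d in auto)
  moreover have "oideal p (i + j + 1) \<subseteq> zp_span p {vartheta p a x y | x y. x \<in> oideal p i \<and> y \<in> oideal p j}"
    by (rule sup_div)
  ultimately show ?thesis using True by simp
next
  case False
  then have d: "\<not> int p dvd (int sa ^ i * int sb ^ j - int sb ^ i * int sa ^ j)" using ord_cond by simp
  have "zp_span p {vartheta p a x y | x y. x \<in> oideal p i \<and> y \<in> oideal p j} \<subseteq> oideal p (i + j + 0)"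
    by (rule span_sub) auto
  moreover have "oideal p (i + j) \<subseteq> zp_span p {vartheta p a x y | x y. x \<in> oideal p i \<and> y \<in> oideal p j}"
  proof (rule sup_nondiv)
    show "coprime (int sa ^ i * int sb ^ j - int sb ^ i * int sa ^ j) (int p)"
      using prime_imp_coprime[OF int_prime d] by (simp add: coprime_commute)
  qed
  ultimately show ?thesis using False by simp
qed

end

end

theorem lemma2p3:
  fixes p :: nat and a :: int
  assumes "prime p" and "p \<ge> 5"
    and "2 \<le> a" and "a \<le> (int p - 1) div 2"
  shows "(\<forall>i j :: nat.
           zp_span p {vartheta p a x y | x y. x \<in> oideal p i \<and> y \<in> oideal p j}
             = oideal p (i + j + (if int (ord_a p a) dvd (int i - int j) then 1 else 0)))
       \<and> (\<forall>i :: nat.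
           zp_span p {vartheta p a x y | x y. x \<in> oideal p i \<and> y \<in> oideal p i}
             = oideal p (2 * i + 1))
       \<and> (\<forall>x \<in> Ocar p. \<forall>y \<in> Ocar p.
           vartheta p a (omul p (otheta p) x) (omul p (otheta p) y)
             = omul p (otheta p) (vartheta p a x y))"
proof (intro conjI allI ballI)
  fix i j :: nat
  show "zp_span p {vartheta p a x y | x y. x \<in> oideal p i \<and> y \<in> oideal p j}
             = oideal p (i + j + (if int (ord_a p a) dvd (int i - int j) then 1 else 0))"
    by (rule claim1[OF assms])
next
  fix i :: nat
  have "zp_span p {vartheta p a x y | x y. x \<in> oideal p i \<and> y \<in> oideal p i}
             = oideal p (i + i + (if int (ord_a p a) dvd (int i - int i) then 1 else 0))"
    by (rule claim1[OF assms])
  then show "zp_span p {vartheta p a x y | x y. x \<in> oideal p i \<and> y \<in> oideal p i}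
             = oideal p (2 * i + 1)" by (simp add: mult_2)
next
  fix x y
  show "vartheta p a (omul p (otheta p) x) (omul p (otheta p) y) = omul p (otheta p) (vartheta p a x y)"
    by (rule claim3[OF assms])
qed

end
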